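(* Let $X$ be a real Hilbert space (finite- or infinite-dimensional) and let $\mathcal{C}$ be a nonempty finite collection of nonempty polyhedral subsets of $X$. Let $\lambda\in[0,2[$ and $x_0\in X$. Generate a sequence $(x_n)_{n\in\mathbb{N}}$ as follows: given $x_n$, pick any $R_n\in\mathcal{R}_{\mathcal{C},[0,\lambda]}$ (the choice may depend arbitrarily on $n$ and on the past) and set $x_{n+1}:=R_n x_n$. Then the sequence $(x_n)_{n\in\mathbb{N}}$ is bounded.
   Context: A subset $C$ of $X$ is polyhedral if it is of the form $C=\{x\in X : \langle a_i,x\rangle\le\beta_i \text{ for all } i\in I\}$ for some finite index set $I$, vectors $a_i\in X\setminus\{0\}$ and reals $\beta_i$ (i.e. an intersection of finitely many closed halfspaces). For a nonempty closed convex set $C$, $P_C$ is the orthogonal (nearest-point) projector onto $C$, and $\mathrm{Id}$ is the identity on $X$. For a finite collection $\mathcal{C}$ of nonempty closed convex sets and an interval $\Lambda\subseteq[0,2]$, the set of relaxed projectors is \[ \mathcal{R}_{\mathcal{C},\Lambda}:=\{(1-\mu)\mathrm{Id}+\mu P_C : C\in\mathcal{C},\ \mu\in\Lambda\}. \] *)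

theory Defs
  imports "HOL-Analysis.Analysis"
begin

definition polyhedral :: "'a::real_inner set \<Rightarrow> bool" where
  "polyhedral C \<longleftrightarrow> (\<exists>(I::nat set) (a::nat \<Rightarrow> 'a) (\<beta>::nat \<Rightarrow> real).
      finite I \<and> (\<forall>i\<in>I. a i \<noteq> 0) \<and> C = {x. \<forall>i\<in>I. inner (a i) x \<le> \<beta> i})"

text \<open>Orthogonal (nearest-point) projector onto C; the nearest point is unique
  for nonempty closed convex C in a real Hilbert space.\<close>
definition proj :: "'a::real_inner set \<Rightarrow> 'a \<Rightarrow> 'a" where
  "proj C x = (THE p. p \<in> C \<and> (\<forall>y\<in>C. dist x p \<le> dist x y))"

definition relaxed_projectors :: "'a::real_inner set set \<Rightarrow> real set \<Rightarrow> ('a \<Rightarrow> 'a) set" where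
  "relaxed_projectors Cs \<Lambda> =
     {R. \<exists>C\<in>Cs. \<exists>\<mu>\<in>\<Lambda>. R = (\<lambda>x. (1 - \<mu>) *\<^sub>R x + \<mu> *\<^sub>R proj C x)}"

end

theory Submission
  imports Defs
begin

lemma min_dist_exists:
  fixes C :: "'a::{real_inner,complete_space} set"
  assumes cl: "closed C" and cv: "convex C" and ne: "C \<noteq> {}"
  shows "\<exists>p\<in>C. \<forall>y\<in>C. dist x p \<le> dist x y"
proof -
  define d where "d = Inf (dist x ` C)"
  have bdd: "bdd_below (dist x ` C)" by (rule bdd_belowI[of _ 0]) auto
  have d_le: "d \<le> dist x y" if "y \<in> C" for y
    unfolding d_def using that bdd by (simp add: cInf_lower)
  have d0: "0 \<le> d" unfolding d_def using ne by (intro cInf_greatest) auto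
  have "\<exists>y\<in>C. dist x y ^ 2 < d ^ 2 + 1 / real (Suc n)" for n
  proof -
    have pos: "0 < 1 / real (Suc n)" by simp
    obtain e where e: "e > 0" "(d + e)^2 < d^2 + 1 / real (Suc n)"
    proof -
      define e where "e = min 1 (1 / real (Suc n) / (2 * d + 2))"
      have e0: "e > 0" unfolding e_def using d0 by auto
      have "(d + e)^2 = d^2 + e * (2*d + e)" by (simp add: power2_eq_square algebra_simps)
      also have "e * (2*d + e) \<le> e * (2*d+1)" using e0 unfolding e_def by (intro mult_left_mono) auto
      also have "e * (2*d+1) < 1 / real (Suc n)"
      proof -
        have "e \<le> 1 / real (Suc n) / (2 * d + 2)" unfolding e_def by simp
        moreover have "2*d+2 > 0" using d0 by simp
        ultimately have "e * (2*d+2) \<le> 1 / real (Suc n)" by (metis pos_le_divide_eq)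
        moreover have "e * (2*d+1) < e * (2*d+2)" using e0 by simp
        ultimately show ?thesis by linarith
      qed
      finally show ?thesis using that e0 by auto
    qed
    have "\<exists>y\<in>C. dist x y < d + e"
    proof (rule ccontr)
      assume "\<not> ?thesis"
      hence "d + e \<le> d" unfolding d_def using ne by (intro cInf_greatest) (auto simp: not_less)
      thus False using e by simp
    qed
    then obtain y where y: "y \<in> C" "dist x y < d + e" by auto
    have "dist x y ^ 2 \<le> (d + e)^2" using y d0 by (intro power_mono) auto
    thus ?thesis using y e by force
  qed
  then obtain f where f: "\<And>n. f n \<in> C" "\<And>n. dist x (f n) ^ 2 < d ^ 2 + 1 / real (Suc n)"
    by metis
  have par: "norm (f m - f n) ^ 2 \<le> 2 / real (Suc m) + 2 / real (Suc n)" for m n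
  proof -
    have "(1/2) *\<^sub>R f m + (1/2) *\<^sub>R f n \<in> C"
      using cv f(1)[of m] f(1)[of n] unfolding convex_def by simp
    hence mid: "(1/2) *\<^sub>R (f m + f n) \<in> C" by (simp add: scaleR_add_right)
    have "d ^ 2 \<le> dist x ((1/2) *\<^sub>R (f m + f n)) ^ 2" using d_le[OF mid] d0 by (intro power_mono) auto
    moreover have "norm (f m - f n) ^ 2 = 2 * dist x (f m) ^ 2 + 2 * dist x (f n) ^ 2 - 4 * dist x ((1/2) *\<^sub>R (f m + f n)) ^ 2"
      unfolding dist_norm power2_norm_eq_inner
      by (simp add: inner_diff_left inner_diff_right inner_add_left inner_add_right inner_commute algebra_simps)
    ultimately show ?thesis using f(2)[of m] f(2)[of n] by linarith
  qed
  have "Cauchy f"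
  proof (rule metric_CauchyI)
    fix e :: real assume e: "e > 0"
    obtain N :: nat where N: "4 / (e^2) < real N" using reals_Archimedean2 by blast
    show "\<exists>M. \<forall>m\<ge>M. \<forall>n\<ge>M. dist (f m) (f n) < e"
    proof (intro exI allI impI)
      fix m n assume mn: "N \<le> m" "N \<le> n"
      have "2 / real (Suc m) < e^2 / 2"
      proof -
        have "4 / e^2 < real (Suc m)" using N mn by linarith
        thus ?thesis using e by (simp add: field_simps)
      qed
      moreover have "2 / real (Suc n) < e^2 / 2"
      proof -
        have "4 / e^2 < real (Suc n)" using N mn by linarith
        thus ?thesis using e by (simp add: field_simps)
      qed
      ultimately have "dist (f m) (f n) ^ 2 < e ^ 2" using par[of m n] by (simp add: dist_norm)
      thus "dist (f m) (f n) < e" using e by (meson power_less_imp_less_base less_le_not_le zero_le_dist)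
    qed
  qed
  then obtain p where p: "f \<longlonglongrightarrow> p" using Cauchy_convergent_iff convergent_def by blast
  have pC: "p \<in> C" using closed_sequentially[OF cl f(1) p] .
  have "dist x p \<le> d"
  proof -
    have lim: "(\<lambda>n. dist x (f n)) \<longlonglongrightarrow> dist x p" using p by (intro tendsto_intros)
    have lim2: "(\<lambda>n. sqrt (d ^ 2 + 1 / real (Suc n))) \<longlonglongrightarrow> sqrt (d^2 + 0)"
      using LIMSEQ_inverse_real_of_nat by (intro tendsto_intros) (simp add: inverse_eq_divide)
    have "dist x (f n) \<le> sqrt (d ^ 2 + 1 / real (Suc n))" for n
      using f(2)[of n] by (metis less_imp_le real_le_rsqrt)
    hence "dist x p \<le> sqrt (d^2 + 0)" by (intro LIMSEQ_le[OF lim lim2]) auto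
    thus ?thesis using d0 by simp
  qed
  thus ?thesis using pC d_le by (meson order_trans)
qed

lemma min_dist_unique:
  fixes C :: "'a::real_inner set"
  assumes cv: "convex C" and p: "p \<in> C" "\<forall>y\<in>C. dist x p \<le> dist x y"
    and q: "q \<in> C" "\<forall>y\<in>C. dist x q \<le> dist x y"
  shows "p = q"
proof -
  have "(1/2) *\<^sub>R p + (1/2) *\<^sub>R q \<in> C"
    using cv p(1) q(1) unfolding convex_def by simp
  hence mid: "(1/2) *\<^sub>R (p + q) \<in> C" by (simp add: scaleR_add_right)
  have e1: "dist x p = dist x q" using p q by (meson antisym)
  have "dist x p ^ 2 \<le> dist x ((1/2) *\<^sub>R (p + q)) ^ 2" using p(2) mid by (intro power_mono) auto
  moreover have "dist x ((1/2) *\<^sub>R (p + q)) ^ 2 = (dist x p ^ 2 + dist x q ^ 2) / 2 - norm (p - q) ^ 2 / 4"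
    unfolding dist_norm power2_norm_eq_inner
    by (simp add: inner_diff_left inner_diff_right inner_add_left inner_add_right inner_commute algebra_simps) (simp add: field_simps)
  ultimately have "norm (p - q) ^ 2 \<le> 0" using e1 by simp
  thus ?thesis by simp
qed

lemma proj_props:
  fixes C :: "'a::{real_inner,complete_space} set"
  assumes "closed C" "convex C" "C \<noteq> {}"
  shows proj_in: "proj C x \<in> C" and proj_min: "\<And>y. y \<in> C \<Longrightarrow> dist x (proj C x) \<le> dist x y"
proof -
  have ex: "\<exists>!p. p \<in> C \<and> (\<forall>y\<in>C. dist x p \<le> dist x y)"
    using min_dist_exists[OF assms, of x] min_dist_unique[OF assms(2)] by blast
  have "proj C x \<in> C \<and> (\<forall>y\<in>C. dist x (proj C x) \<le> dist x y)"
    unfolding proj_def by (rule theI'[OF ex])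
  thus "proj C x \<in> C" "\<And>y. y \<in> C \<Longrightarrow> dist x (proj C x) \<le> dist x y" by auto
qed

lemma proj_eqI:
  fixes C :: "'a::{real_inner,complete_space} set"
  assumes "convex C" "p \<in> C" "\<forall>y\<in>C. dist x p \<le> dist x y"
  shows "proj C x = p"
proof -
  have ex: "\<exists>!p. p \<in> C \<and> (\<forall>y\<in>C. dist x p \<le> dist x y)"
    using assms min_dist_unique[OF assms(1)] by blast
  show ?thesis unfolding proj_def using ex assms by (intro the1_equality) auto
qed

lemma proj_vi:
  fixes C :: "'a::{real_inner,complete_space} set"
  assumes cc: "closed C" "convex C" "C \<noteq> {}" and c: "c \<in> C"
  shows "inner (x - proj C x) (c - proj C x) \<le> 0"
proof (rule ccontr)
  define p where "p = proj C x"
  assume "\<not> ?thesis"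
  hence v: "inner (x - p) (c - p) > 0" unfolding p_def by simp
  have pC: "p \<in> C" unfolding p_def by (rule proj_in[OF cc])
  have cp: "c \<noteq> p" using v by auto
  define w where "w = norm (c - p) ^ 2"
  have w: "w > 0" unfolding w_def using cp by simp
  define th where "th = min 1 (inner (x - p) (c - p) / w)"
  have th: "0 < th" "th \<le> 1" "th \<le> inner (x - p) (c - p) / w" unfolding th_def using v w by auto
  have "(1 - th) *\<^sub>R p + th *\<^sub>R c \<in> C" using cc(2) pC c th unfolding convex_def by simp
  hence "dist x p \<le> dist x ((1 - th) *\<^sub>R p + th *\<^sub>R c)" unfolding p_def by (rule proj_min[OF cc])
  hence "dist x p ^ 2 \<le> dist x ((1 - th) *\<^sub>R p + th *\<^sub>R c) ^ 2" by (intro power_mono) auto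
  moreover have "(1 - th) *\<^sub>R p + th *\<^sub>R c = p + th *\<^sub>R (c - p)" by (simp add: algebra_simps)
  moreover have "dist x (p + th *\<^sub>R (c - p)) ^ 2 = dist x p ^ 2 - 2 * th * inner (x - p) (c - p) + th ^ 2 * w"
    unfolding dist_norm power2_norm_eq_inner w_def
    by (simp add: inner_diff_left inner_diff_right inner_add_left inner_add_right inner_commute algebra_simps power2_eq_square)
  ultimately have "2 * th * inner (x - p) (c - p) \<le> th ^ 2 * w" by simp
  hence "2 * inner (x - p) (c - p) \<le> th * w" using th(1) by (simp add: power2_eq_square)
  moreover have "th * w \<le> inner (x - p) (c - p)" using th(3) w by (simp add: pos_le_divide_eq)
  ultimately show False using v by simp
qed

lemma vi_proj:
  fixes C :: "'a::{real_inner,complete_space} set"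
  assumes cv: "convex C" and p: "p \<in> C" and vi: "\<forall>c\<in>C. inner (x - p) (c - p) \<le> 0"
  shows "proj C x = p"
proof (rule proj_eqI[OF cv p], intro ballI)
  fix y assume y: "y \<in> C"
  have "dist x y ^ 2 = dist x p ^ 2 - 2 * inner (x - p) (y - p) + norm (y - p) ^ 2"
    unfolding dist_norm power2_norm_eq_inner
    by (simp add: inner_diff_left inner_diff_right inner_commute algebra_simps)
  hence "dist x p ^ 2 \<le> dist x y ^ 2" using vi y by (smt (verit) zero_le_power2)
  thus "dist x p \<le> dist x y" by (simp add: power2_le_iff_abs_le)
qed


definition cset :: "('a::real_inner \<times> real) set \<Rightarrow> 'a set" where
  "cset S = {x. \<forall>(a,b)\<in>S. inner a x \<le> b}"

definition rp :: "('a::real_inner \<times> real) set \<Rightarrow> real \<Rightarrow> 'a \<Rightarrow> 'a" where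
  "rp S \<mu> x = (1 - \<mu>) *\<^sub>R x + \<mu> *\<^sub>R proj (cset S) x"

lemma cset_closed: "closed (cset S)"
proof -
  have "cset S = (\<Inter>(a,b)\<in>S. {x. inner a x \<le> b})" unfolding cset_def by auto
  thus ?thesis by (auto intro!: closed_INT closed_halfspace_le)
qed

lemma cset_convex: "convex (cset S)"
proof -
  have "cset S = (\<Inter>(a,b)\<in>S. {x. inner a x \<le> b})" unfolding cset_def by auto
  thus ?thesis by (auto intro!: convex_INT convex_halfspace_le)
qed

lemma firm:
  fixes C :: "'a::{real_inner,complete_space} set"
  assumes cc: "closed C" "convex C" "C \<noteq> {}"
  shows "norm (proj C x - proj C x') ^ 2 \<le> inner (x - x') (proj C x - proj C x')"
proof -
  have 1: "inner (x - proj C x) (proj C x' - proj C x) \<le> 0" by (rule proj_vi[OF cc proj_in[OF cc]])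
  have 2: "inner (x' - proj C x') (proj C x - proj C x') \<le> 0" by (rule proj_vi[OF cc proj_in[OF cc]])
  have "inner (x - x') (proj C x - proj C x') - norm (proj C x - proj C x') ^ 2
      = - inner (x - proj C x) (proj C x' - proj C x) - inner (x' - proj C x') (proj C x - proj C x')"
    unfolding power2_norm_eq_inner
    by (simp add: inner_diff_left inner_diff_right inner_commute algebra_simps)
  thus ?thesis using 1 2 by linarith
qed

lemma relax_nonexp:
  fixes C :: "'a::{real_inner,complete_space} set"
  assumes cc: "closed C" "convex C" "C \<noteq> {}" and mu: "0 \<le> \<mu>" "\<mu> \<le> 2"
  shows "norm (((1 - \<mu>) *\<^sub>R x + \<mu> *\<^sub>R proj C x) - ((1 - \<mu>) *\<^sub>R x' + \<mu> *\<^sub>R proj C x')) \<le> norm (x - x')"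
proof -
  define d where "d = x - x'"
  define e where "e = proj C x - proj C x'"
  have f: "norm e ^ 2 \<le> inner d e" unfolding d_def e_def by (rule firm[OF cc])
  have cs: "inner d e \<le> norm d * norm e" by (rule norm_cauchy_schwarz)
  have ed: "norm e \<le> norm d"
  proof (cases "norm e = 0")
    case True thus ?thesis by simp
  next
    case False
    have "norm e * norm e \<le> norm d * norm e" using f cs unfolding power2_eq_square by linarith
    moreover have "norm e > 0" using False by simp
    ultimately show ?thesis by (metis mult_right_le_imp_le)
  qed
  have ide: "d \<bullet> e \<le> norm d ^ 2" using cs ed by (simp add: power2_eq_square mult_left_mono order_trans)
  have eq: "((1 - \<mu>) *\<^sub>R x + \<mu> *\<^sub>R proj C x) - ((1 - \<mu>) *\<^sub>R x' + \<mu> *\<^sub>R proj C x') = (1 - \<mu>) *\<^sub>R d + \<mu> *\<^sub>R e"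
    unfolding d_def e_def by (simp add: algebra_simps)
  have sq: "norm ((1 - \<mu>) *\<^sub>R d + \<mu> *\<^sub>R e) ^ 2 = (1-\<mu>)^2 * norm d ^ 2 + 2 * \<mu> * (1 - \<mu>) * inner d e + \<mu>^2 * norm e ^ 2"
    unfolding power2_norm_eq_inner
    by (simp add: inner_add_left inner_add_right inner_commute algebra_simps power2_eq_square)
  have "(1-\<mu>)^2 * norm d ^ 2 + 2 * \<mu> * (1 - \<mu>) * inner d e + \<mu>^2 * norm e ^ 2 \<le> norm d ^ 2"
  proof (cases "\<mu> \<le> 1")
    case True
    have m2: "\<mu> * \<mu> \<le> 2 * \<mu>" using mu mult_right_mono[of \<mu> 2 \<mu>] by simp
    have "\<mu>^2 * norm e ^ 2 \<le> \<mu>^2 * inner d e" using f by (simp add: mult_left_mono)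
    moreover have "(2*\<mu> - \<mu>^2) * inner d e \<le> (2*\<mu> - \<mu>^2) * norm d ^ 2"
      using ide mu True m2 by (intro mult_left_mono) (auto simp: power2_eq_square)
    ultimately show ?thesis by (simp add: algebra_simps power2_eq_square)
  next
    case False
    have "2 * \<mu> * (1 - \<mu>) * inner d e \<le> 2 * \<mu> * (1 - \<mu>) * norm e ^ 2"
    proof -
      have "(2 * \<mu> * (\<mu> - 1)) * norm e ^ 2 \<le> (2 * \<mu> * (\<mu> - 1)) * inner d e"
        using f False mu by (intro mult_left_mono) auto
      thus ?thesis by (simp add: algebra_simps)
    qed
    moreover have "(2*\<mu> - \<mu>^2) * norm e ^ 2 \<le> (2*\<mu> - \<mu>^2) * norm d ^ 2"
      using ed mu mult_right_mono[of \<mu> 2 \<mu>] by (intro mult_left_mono power_mono) (auto simp: power2_eq_square)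
    ultimately show ?thesis by (simp add: algebra_simps power2_eq_square)
  qed
  hence "norm ((1 - \<mu>) *\<^sub>R d + \<mu> *\<^sub>R e) ^ 2 \<le> norm d ^ 2" using sq by simp
  hence "norm ((1 - \<mu>) *\<^sub>R d + \<mu> *\<^sub>R e) \<le> norm d" by (simp add: power2_le_iff_abs_le)
  thus ?thesis using eq d_def by simp
qed

lemma rp_nonexp:
  assumes "cset S \<noteq> {}" "0 \<le> \<mu>" "\<mu> \<le> 2"
  shows "norm (rp S \<mu> (x::'a::{real_inner,complete_space}) - rp S \<mu> x') \<le> norm (x - x')"
  unfolding rp_def by (rule relax_nonexp[OF cset_closed cset_convex assms])

lemma rp_norm:
  fixes x :: "'a::{real_inner,complete_space}"
  assumes ne: "cset S \<noteq> {}" and c: "c \<in> cset S" and mu: "0 \<le> \<mu>"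
  shows "norm (rp S \<mu> x) ^ 2 \<le> norm x ^ 2 + \<mu> * norm (x - proj (cset S) x) * (2 * norm c - (2 - \<mu>) * norm (x - proj (cset S) x))"
proof -
  note cc = cset_closed cset_convex ne
  define p where "p = proj (cset S) x"
  define d where "d = norm (x - p)"
  have vi: "inner (x - p) (c - p) \<le> 0" unfolding p_def by (rule proj_vi[OF cc c])
  have "inner (x - p) c \<ge> - d * norm c"
    using norm_cauchy_schwarz[of "x - p" c] Cauchy_Schwarz_ineq2[of "x-p" c] unfolding d_def by (simp add: abs_le_iff)
  hence ip: "inner (p - x) p \<le> d * norm c" using vi by (simp add: inner_diff_left inner_diff_right inner_commute algebra_simps)
  have eq: "rp S \<mu> x = x + \<mu> *\<^sub>R (p - x)" unfolding rp_def p_def by (simp add: algebra_simps)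
  have "norm (x + \<mu> *\<^sub>R (p - x)) ^ 2 = norm x ^ 2 + 2 * \<mu> * (inner (p - x) p - d^2) + \<mu>^2 * d^2"
    unfolding d_def power2_norm_eq_inner
    by (simp add: inner_add_left inner_add_right inner_diff_left inner_diff_right inner_commute algebra_simps power2_eq_square)
  also have "\<dots> \<le> norm x ^ 2 + 2 * \<mu> * (d * norm c - d^2) + \<mu>^2 * d^2"
    using ip mu by (simp add: mult_left_mono)
  also have "\<dots> = norm x ^ 2 + \<mu> * d * (2 * norm c - (2 - \<mu>) * d)" by (simp add: algebra_simps power2_eq_square)
  finally show ?thesis using eq unfolding d_def p_def by simp
qed

lemma vi_x:
  fixes x :: "'a::{real_inner,complete_space}"
  assumes ne: "cset S \<noteq> {}" and c: "c \<in> cset S"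
  shows "inner (x - proj (cset S) x) x \<ge> norm (x - proj (cset S) x) ^ 2 - norm (x - proj (cset S) x) * norm c"
proof -
  note cc = cset_closed cset_convex ne
  define p where "p = proj (cset S) x"
  have vi: "inner (x - p) (c - p) \<le> 0" unfolding p_def by (rule proj_vi[OF cc c])
  have "inner (x - p) c \<ge> - norm (x - p) * norm c"
    using Cauchy_Schwarz_ineq2[of "x-p" c] by (simp add: abs_le_iff)
  moreover have "inner (x - p) x = inner (x - p) p + norm (x - p) ^ 2"
    unfolding power2_norm_eq_inner by (simp add: inner_diff_left inner_diff_right inner_commute algebra_simps)
  ultimately show ?thesis using vi unfolding p_def[symmetric] by (simp add: inner_diff_right)
qed

lemma cset_translate:
  assumes "\<forall>(a,b)\<in>S. inner a w = 0"
  shows "x \<in> cset S \<longleftrightarrow> x + w \<in> cset S"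
  using assms unfolding cset_def by (fastforce simp: inner_add_right)

lemma proj_translate:
  fixes x :: "'a::{real_inner,complete_space}"
  assumes ne: "cset S \<noteq> {}" and w: "\<forall>(a,b)\<in>S. inner a w = 0"
  shows "proj (cset S) (x + w) = proj (cset S) x + w"
proof (rule vi_proj[OF cset_convex])
  note cc = cset_closed cset_convex ne
  show "proj (cset S) x + w \<in> cset S" using cset_translate[OF w] proj_in[OF cc] by blast
  show "\<forall>c\<in>cset S. inner (x + w - (proj (cset S) x + w)) (c - (proj (cset S) x + w)) \<le> 0"
  proof
    fix c assume c: "c \<in> cset S"
    have "c - w \<in> cset S" using cset_translate[OF w, of "c - w"] c by simp
    from proj_vi[OF cc this, of x] show "inner (x + w - (proj (cset S) x + w)) (c - (proj (cset S) x + w)) \<le> 0"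
      by (simp add: algebra_simps)
  qed
qed

lemma rp_translate:
  fixes x :: "'a::{real_inner,complete_space}"
  assumes ne: "cset S \<noteq> {}" and w: "\<forall>(a,b)\<in>S. inner a w = 0"
  shows "rp S \<mu> (x + w) = rp S \<mu> x + w"
  unfolding rp_def proj_translate[OF assms] by (simp add: algebra_simps)

lemma proj_orth:
  fixes x :: "'a::{real_inner,complete_space}"
  assumes ne: "cset S \<noteq> {}" and w: "\<forall>(a,b)\<in>S. inner a u = 0"
  shows "inner (x - proj (cset S) x) u = 0"
proof -
  note cc = cset_closed cset_convex ne
  define p where "p = proj (cset S) x"
  have pC: "p \<in> cset S" unfolding p_def by (rule proj_in[OF cc])
  have w2: "\<forall>(a,b)\<in>S. inner a (-u) = 0" using w by auto
  have "p + u \<in> cset S" using cset_translate[OF w] pC by blast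
  from proj_vi[OF cc this, of x] have 1: "inner (x - p) u \<le> 0" unfolding p_def by simp
  have "p + - u \<in> cset S" using cset_translate[OF w2] pC by blast
  from proj_vi[OF cc this, of x] have 2: "inner (x - p) u \<ge> 0" unfolding p_def by simp
  from 1 2 show ?thesis unfolding p_def by simp
qed


inductive reach :: "('a::{real_inner,complete_space} \<times> real) set set \<Rightarrow> real \<Rightarrow> 'a \<Rightarrow> 'a \<Rightarrow> bool"
  for F lam where
  refl: "reach F lam x x"
| step: "reach F lam x z \<Longrightarrow> S \<in> F \<Longrightarrow> 0 \<le> \<mu> \<Longrightarrow> \<mu> \<le> lam \<Longrightarrow> reach F lam x (rp S \<mu> z)"

lemma reach_trans: "reach F lam y z \<Longrightarrow> reach F lam x y \<Longrightarrow> reach F lam x z"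
  by (induction rule: reach.induct) (auto intro: reach.step)

lemma reach_one: "S \<in> F \<Longrightarrow> 0 \<le> \<mu> \<Longrightarrow> \<mu> \<le> lam \<Longrightarrow> reach F lam x (rp S \<mu> x)"
  using reach.step[OF reach.refl] by blast

lemma reach_sim:
  assumes ne: "\<forall>S\<in>F. cset S \<noteq> {}" and lam: "lam \<le> 2"
  shows "reach F lam x z \<Longrightarrow> \<exists>z'. reach F lam x' z' \<and> norm (z - z') \<le> norm (x - x')"
proof (induction rule: reach.induct)
  case refl thus ?case by (auto intro: reach.refl)
next
  case (step y z S \<mu>)
  then obtain z' where z': "reach F lam x' z'" "norm (z - z') \<le> norm (y - x')" by auto
  have "norm (rp S \<mu> z - rp S \<mu> z') \<le> norm (z - z')"
    using step ne lam by (intro rp_nonexp) auto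
  thus ?case using z' step by (intro exI[of _ "rp S \<mu> z'"]) (auto intro: reach.step)
qed

lemma bound_from_zero:
  assumes ne: "\<forall>S\<in>F. cset S \<noteq> {}" and lam: "lam \<le> 2"
    and C: "\<forall>z. reach F lam 0 z \<longrightarrow> norm z \<le> C"
  shows "\<forall>x z. reach F lam x z \<longrightarrow> norm z \<le> norm x + C"
proof (intro allI impI)
  fix x z assume "reach F lam x z"
  from reach_sim[OF ne lam this, of 0] obtain z' where "reach F lam 0 z'" "norm (z - z') \<le> norm x" by auto
  with C have "norm z' \<le> C" by auto
  moreover have "norm z \<le> norm z' + norm (z - z')" by (metis norm_triangle_sub)
  ultimately show "norm z \<le> norm x + C" using \<open>norm (z - z') \<le> norm x\<close> by linarith
qed

definition phi :: "('a::{real_inner,complete_space} \<times> real) set set \<Rightarrow> real \<Rightarrow> 'a \<Rightarrow> real" where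
  "phi F lam y = Sup (norm ` {z. reach F lam y z})"

lemma phi_props:
  assumes K: "\<forall>y z. reach F lam y z \<longrightarrow> norm z \<le> norm y + K"
  shows phi_ge: "norm y \<le> phi F lam y"
    and phi_le: "phi F lam y \<le> norm y + K"
    and phi_reach: "reach F lam y z \<Longrightarrow> norm z \<le> phi F lam y"
proof -
  have bdd: "bdd_above (norm ` {z. reach F lam y z})" using K by (auto intro!: bdd_aboveI)
  have nem: "{z. reach F lam y z} \<noteq> {}" using reach.refl by auto
  show "reach F lam y z \<Longrightarrow> norm z \<le> phi F lam y" unfolding phi_def using bdd by (auto intro!: cSup_upper)
  show "norm y \<le> phi F lam y" unfolding phi_def using bdd reach.refl by (auto intro!: cSup_upper)
  show "phi F lam y \<le> norm y + K" unfolding phi_def using nem K by (auto intro!: cSup_least)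
qed

lemma phi_mono:
  assumes K: "\<forall>y z. reach F lam y z \<longrightarrow> norm z \<le> norm y + K" and r: "reach F lam y y'"
  shows "phi F lam y' \<le> phi F lam y"
proof -
  have nem: "{z. reach F lam y' z} \<noteq> {}" using reach.refl by auto
  show ?thesis unfolding phi_def[of F lam y']
    using nem phi_reach[OF K reach_trans[OF _ r]] by (auto intro!: cSup_least)
qed

lemma phi_lip:
  assumes ne: "\<forall>S\<in>F. cset S \<noteq> {}" and lam: "lam \<le> 2"
    and K: "\<forall>y z. reach F lam y z \<longrightarrow> norm z \<le> norm y + K"
  shows "phi F lam y \<le> phi F lam y' + norm (y - y')"
proof -
  have nem: "{z. reach F lam y z} \<noteq> {}" using reach.refl by auto
  have "norm z \<le> phi F lam y' + norm (y - y')" if r: "reach F lam y z" for z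
  proof -
    from reach_sim[OF ne lam r, of y'] obtain z' where z': "reach F lam y' z'" "norm (z - z') \<le> norm (y - y')" by auto
    have "norm z' \<le> phi F lam y'" by (rule phi_reach[OF K z'(1)])
    moreover have "norm z \<le> norm z' + norm (z - z')" by (metis norm_triangle_sub)
    ultimately show ?thesis using z'(2) by linarith
  qed
  thus ?thesis unfolding phi_def[of F lam y] using nem by (auto intro!: cSup_least)
qed

definition orthonormal :: "'a::real_inner set \<Rightarrow> bool" where
  "orthonormal E \<longleftrightarrow> (\<forall>e\<in>E. norm e = 1) \<and> (\<forall>e\<in>E. \<forall>f\<in>E. e \<noteq> f \<longrightarrow> inner e f = 0)"

definition pN :: "'a::real_inner set \<Rightarrow> 'a \<Rightarrow> 'a" where
  "pN E x = (\<Sum>e\<in>E. inner x e *\<^sub>R e)"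

lemma pN_coeff:
  assumes "finite E" "orthonormal E" "f \<in> E"
  shows "inner (pN E x) f = inner x f"
proof -
  have "inner (pN E x) f = (\<Sum>e\<in>E. inner x e * inner e f)" unfolding pN_def by (simp add: inner_sum_left)
  also have "\<dots> = (\<Sum>e\<in>{f}. inner x e * inner e f)"
    using assms unfolding orthonormal_def by (intro sum.mono_neutral_right) auto
  also have "\<dots> = inner x f" using assms unfolding orthonormal_def by (simp add: power2_norm_eq_inner[symmetric] dot_square_norm)
  finally show ?thesis .
qed

lemma pN_span: "finite E \<Longrightarrow> pN E x \<in> span E"
  unfolding pN_def by (intro span_sum span_scale span_base) auto

lemma orth_span:
  assumes "\<forall>e\<in>E. inner w e = 0" "v \<in> span E"
  shows "inner w v = 0"
  using assms(2)
proof (induction rule: span_induct)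
  case base show ?case by (auto simp: subspace_def inner_add_right)
next
  case step show ?case using assms(1) step by auto
qed

lemma pN_orth:
  assumes "finite E" "orthonormal E" "v \<in> span E"
  shows "inner (x - pN E x) v = 0"
  by (rule orth_span[OF _ assms(3)]) (use pN_coeff[OF assms(1,2)] in \<open>auto simp: inner_diff_left\<close>)

lemma pN_id:
  assumes "finite E" "orthonormal E" "x \<in> span E"
  shows "pN E x = x"
proof -
  have "x - pN E x \<in> span E" using assms pN_span by (auto intro: span_diff)
  hence "inner (x - pN E x) (x - pN E x) = 0" by (rule pN_orth[OF assms(1,2)])
  thus ?thesis by simp
qed


lemma gram_schmidt:
  fixes A :: "'a::real_inner set"
  assumes "finite A"
  shows "\<exists>E. finite E \<and> orthonormal E \<and> span E = span A"
  using assms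
proof (induction rule: finite_induct)
  case empty
  show ?case by (intro exI[of _ "{}"]) (auto simp: orthonormal_def)
next
  case (insert a A)
  then obtain E where E: "finite E" "orthonormal E" "span E = span A" by auto
  define a' where "a' = a - pN E a"
  have pa: "pN E a \<in> span A" using pN_span[OF E(1)] E(3) by auto
  show ?case
  proof (cases "a' = 0")
    case True
    hence "a \<in> span A" using pa unfolding a'_def by simp
    hence "span (insert a A) = span A" by (rule span_redundant)
    thus ?thesis using E by auto
  next
    case False
    define e0 where "e0 = (1 / norm a') *\<^sub>R a'"
    have ne0: "norm e0 = 1" unfolding e0_def using False by simp
    have oe: "inner e0 f = 0" if "f \<in> E" for f
    proof -
      have "inner a' f = 0" unfolding a'_def using pN_coeff[OF E(1,2) that, of a] by (simp add: inner_diff_left)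
      thus ?thesis unfolding e0_def by simp
    qed
    have on: "orthonormal (insert e0 E)"
      using E(2) ne0 oe unfolding orthonormal_def by (auto simp: inner_commute)
    have s1: "insert e0 E \<subseteq> span (insert a A)"
    proof -
      have "a \<in> span (insert a A)" by (simp add: span_base)
      moreover have "pN E a \<in> span (insert a A)" using pa span_mono[of A "insert a A"] by auto
      ultimately have "a' \<in> span (insert a A)" unfolding a'_def by (rule span_diff)
      hence "e0 \<in> span (insert a A)" unfolding e0_def by (rule span_scale)
      moreover have "E \<subseteq> span (insert a A)" using E(3) span_superset[of E] span_mono[of A "insert a A"] by auto
      ultimately show ?thesis by auto
    qed
    have s2: "insert a A \<subseteq> span (insert e0 E)"
    proof -
      have "a = norm a' *\<^sub>R e0 + pN E a" unfolding e0_def a'_def using False by simp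
      moreover have "e0 \<in> span (insert e0 E)" by (simp add: span_base)
      moreover have "pN E a \<in> span (insert e0 E)" using pN_span[OF E(1)] span_mono[of E "insert e0 E"] by auto
      ultimately have "a \<in> span (insert e0 E)" using span_add[OF span_scale[of e0 "insert e0 E" "norm a'"]] by metis
      moreover have "A \<subseteq> span (insert e0 E)" using E(3) span_superset[of A] span_mono[of E "insert e0 E"] by auto
      ultimately show ?thesis by auto
    qed
    have "span (insert e0 E) = span (insert a A)" using s1 s2 by (simp add: span_eq)
    thus ?thesis using E(1) on by (intro exI[of _ "insert e0 E"]) auto
  qed
qed

definition pbox :: "'a::real_normed_vector set \<Rightarrow> 'a set" where
  "pbox E = (\<lambda>c. \<Sum>e\<in>E. c e *\<^sub>R e) ` {c. \<forall>e\<in>E. \<bar>c e\<bar> \<le> 1}"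

lemma compact_pbox:
  fixes E :: "'a::real_normed_vector set"
  assumes "finite E"
  shows "compact (pbox E)"
  using assms
proof (induction rule: finite_induct)
  case empty
  have "pbox ({}::'a set) = {0}" unfolding pbox_def by auto
  thus ?case by simp
next
  case (insert e E)
  have eq: "pbox (insert e E) = {x + y | x y. x \<in> (\<lambda>s. s *\<^sub>R e) ` {-1..1} \<and> y \<in> pbox E}"
  proof
    show "pbox (insert e E) \<subseteq> {x + y | x y. x \<in> (\<lambda>s. s *\<^sub>R e) ` {-1..1} \<and> y \<in> pbox E}"
    proof
      fix z assume "z \<in> pbox (insert e E)"
      then obtain c where c: "\<forall>f\<in>insert e E. \<bar>c f\<bar> \<le> 1" "z = (\<Sum>f\<in>insert e E. c f *\<^sub>R f)"
        unfolding pbox_def by auto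
      have "z = c e *\<^sub>R e + (\<Sum>f\<in>E. c f *\<^sub>R f)" using c(2) insert by simp
      moreover have "c e \<in> {-1..1}" using c(1) by (auto simp: abs_le_iff)
      moreover have "(\<Sum>f\<in>E. c f *\<^sub>R f) \<in> pbox E" using c(1) unfolding pbox_def by auto
      ultimately show "z \<in> {x + y | x y. x \<in> (\<lambda>s. s *\<^sub>R e) ` {-1..1} \<and> y \<in> pbox E}" by blast
    qed
    show "{x + y | x y. x \<in> (\<lambda>s. s *\<^sub>R e) ` {-1..1} \<and> y \<in> pbox E} \<subseteq> pbox (insert e E)"
    proof
      fix z assume "z \<in> {x + y | x y. x \<in> (\<lambda>s. s *\<^sub>R e) ` {-1..1} \<and> y \<in> pbox E}"
      then obtain s c where sc: "s \<in> {-1..1}" "\<forall>f\<in>E. \<bar>c f\<bar> \<le> 1" "z = s *\<^sub>R e + (\<Sum>f\<in>E. c f *\<^sub>R f)"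
        unfolding pbox_def by auto
      define c' where "c' = c(e := s)"
      have "(\<Sum>f\<in>E. c' f *\<^sub>R f) = (\<Sum>f\<in>E. c f *\<^sub>R f)"
        unfolding c'_def using insert by (intro sum.cong) auto
      hence "z = (\<Sum>f\<in>insert e E. c' f *\<^sub>R f)" using sc insert by (simp add: c'_def)
      moreover have "\<forall>f\<in>insert e E. \<bar>c' f\<bar> \<le> 1" using sc unfolding c'_def by (auto simp: abs_le_iff)
      ultimately show "z \<in> pbox (insert e E)" unfolding pbox_def by auto
    qed
  qed
  have "compact ((\<lambda>s. s *\<^sub>R e) ` {-1..1::real})"
    by (intro compact_continuous_image continuous_intros) auto
  thus ?case unfolding eq using insert by (intro compact_sums) auto
qed

lemma compact_sphere_span:
  fixes E :: "'a::real_inner set"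
  assumes E: "finite E" "orthonormal E"
  shows "compact {x \<in> span E. norm x = 1}"
proof -
  have "{x \<in> span E. norm x = 1} = pbox E \<inter> {x. norm x = 1}"
  proof
    show "{x \<in> span E. norm x = 1} \<subseteq> pbox E \<inter> {x. norm x = 1}"
    proof
      fix x assume x: "x \<in> {x \<in> span E. norm x = 1}"
      have "x = (\<Sum>e\<in>E. inner x e *\<^sub>R e)" using pN_id[OF E, of x] x unfolding pN_def by auto
      moreover have "\<forall>e\<in>E. \<bar>inner x e\<bar> \<le> 1"
      proof
        fix e assume "e \<in> E"
        hence "norm e = 1" using E(2) unfolding orthonormal_def by auto
        thus "\<bar>inner x e\<bar> \<le> 1" using x Cauchy_Schwarz_ineq2[of x e] by simp
      qed
      ultimately show "x \<in> pbox E \<inter> {x. norm x = 1}" using x unfolding pbox_def by auto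
    qed
    show "pbox E \<inter> {x. norm x = 1} \<subseteq> {x \<in> span E. norm x = 1}"
      unfolding pbox_def using span_base[of _ E] by (auto intro!: span_sum span_scale)
  qed
  moreover have "closed {x::'a. norm x = 1}" by (intro closed_Collect_eq continuous_intros)
  ultimately show ?thesis using compact_Int_closed[OF compact_pbox[OF E(1)]] by simp
qed


lemma sq_lower:
  fixes a t z :: real
  assumes "0 \<le> a" "a \<le> 1" "0 \<le> t" "0 \<le> z"
  shows "(1 - a/2) * (t^2 + 2 * t * z) \<le> ((1 - a/4) * (t + z))^2"
proof -
  have "0 \<le> a * a" by simp
  moreover have "(1 - a/4)^2 = 1 - a/2 + (a * a) / 16" by (simp add: power2_eq_square algebra_simps)
  ultimately have c: "1 - a/2 \<le> (1 - a/4)^2" by linarith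
  have "(1 - a/2) * (t^2 + 2 * t * z) \<le> (1 - a/4)^2 * (t^2 + 2 * t * z)"
    using c assms by (intro mult_right_mono) auto
  also have "\<dots> \<le> (1 - a/4)^2 * (t + z)^2"
  proof (rule mult_left_mono)
    show "t^2 + 2 * t * z \<le> (t + z)^2" using assms by (simp add: power2_eq_square algebra_simps)
  qed simp
  finally show ?thesis by (simp add: power_mult_distrib)
qed

lemma A2: fixes k t Y :: real
  assumes k: "0 < k" "k \<le> 1/16" and t: "0 \<le> t" and Y: "(k/8) * t \<le> Y" "Y \<le> k * t / 2"
  shows "t^2 + Y^2 \<le> ((1 - (k * (k/8))/4) * (t + k * Y))^2"
proof -
  define a where "a = k * (k/8)"
  define P where "P = k * t * Y"
  have kk: "k * k \<le> 1/256" using mult_mono[of k "1/16" k "1/16"] k by simp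
  have a: "0 \<le> a" "a \<le> 1" unfolding a_def using k kk by auto
  have Y0: "0 \<le> Y" using Y k t by (meson order_trans zero_le_divide_iff zero_le_mult_iff less_imp_le zero_le_numeral)
  have P0: "0 \<le> P" unfolding P_def using k t Y0 by simp
  have low: "(1 - a/2) * (t^2 + 2 * t * (k * Y)) \<le> ((1 - a/4) * (t + k * Y))^2"
    using sq_lower[OF a t] k Y0 by simp
  have e1: "(1 - a/2) * (t^2 + 2 * t * (k * Y)) = t^2 + 2 * P - (a/2) * t^2 - a * P"
    unfolding P_def by (simp add: algebra_simps power2_eq_square)
  have s1: "Y^2 \<le> P / 2"
  proof -
    have "Y * Y \<le> Y * (k * t / 2)" using Y Y0 by (intro mult_left_mono) auto
    thus ?thesis unfolding P_def by (simp add: power2_eq_square algebra_simps)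
  qed
  have s2: "(a/2) * t^2 \<le> P / 2"
  proof -
    have "(k/2 * t) * ((k/8) * t) \<le> (k/2 * t) * Y" using Y k t by (intro mult_left_mono) auto
    thus ?thesis unfolding P_def a_def by (simp add: power2_eq_square algebra_simps)
  qed
  have s3: "a * P \<le> P" using mult_right_mono[of a 1 P] a P0 by simp
  have "t^2 + Y^2 \<le> t^2 + 2 * P - (a/2) * t^2 - a * P" using s1 s2 s3 by linarith
  thus ?thesis using low e1 unfolding a_def by linarith
qed

lemma A1: fixes k t q :: real
  assumes k: "0 < k" "k \<le> 1/16" and t: "0 \<le> t" and q: "0 \<le> q" "q \<le> (k/8) * t"
  shows "t^2 + q^2 - 4 * k * t * ((k/8) * t - q) \<le> ((1 - (k * (k/8))/4) * (t + k * q))^2"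
proof -
  define a where "a = k * (k/8)"
  define P where "P = k * t * q"
  have kk: "k * k \<le> 1/256" using mult_mono[of k "1/16" k "1/16"] k by simp
  have a: "0 \<le> a" "a \<le> 1" unfolding a_def using k kk by auto
  have a2: "a \<le> 1/16" unfolding a_def using k kk by auto
  have P0: "0 \<le> P" unfolding P_def using k t q by simp
  have low: "(1 - a/2) * (t^2 + 2 * t * (k * q)) \<le> ((1 - a/4) * (t + k * q))^2"
    using sq_lower[OF a t] k q by simp
  have e1: "(1 - a/2) * (t^2 + 2 * t * (k * q)) = t^2 + 2 * P - (a/2) * t^2 - a * P"
    unfolding P_def by (simp add: algebra_simps power2_eq_square)
  have e2: "t^2 + q^2 - 4 * k * t * ((k/8) * t - q) = t^2 + q^2 - 4 * a * t^2 + 4 * P"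
    unfolding P_def a_def by (simp add: algebra_simps power2_eq_square)
  have s1: "q^2 \<le> a * t^2 / 8"
  proof -
    have "q * q \<le> ((k/8) * t) * ((k/8) * t)" using q by (intro mult_mono) auto
    thus ?thesis unfolding a_def by (simp add: power2_eq_square algebra_simps)
  qed
  have s2: "P \<le> a * t^2"
  proof -
    have "(k * t) * q \<le> (k * t) * ((k/8) * t)" using q k t by (intro mult_left_mono) auto
    thus ?thesis unfolding P_def a_def by (simp add: power2_eq_square algebra_simps)
  qed
  have at0: "0 \<le> a * t^2" using a by simp
  have s3: "a * P \<le> (1/16) * (a * t^2)" using a2 s2 P0 at0 by (meson mult_mono order_trans zero_le_numeral zero_le_divide_iff zero_le_one)
  have "t^2 + q^2 - 4 * a * t^2 + 4 * P \<le> t^2 + 2 * P - (a/2) * t^2 - a * P" using s1 s2 s3 at0 by linarith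
  thus ?thesis using low e1 e2 unfolding a_def by linarith
qed


definition Wg :: "'a::real_inner \<Rightarrow> real \<Rightarrow> ('a \<Rightarrow> real) \<Rightarrow> 'a \<Rightarrow> real" where
  "Wg u kp Phi z = inner z u + kp * Phi (z - inner z u *\<^sub>R u)"

definition Ug :: "'a::real_inner \<Rightarrow> real \<Rightarrow> 'a \<Rightarrow> bool" where
  "Ug u d z \<longleftrightarrow> norm (z - inner z u *\<^sub>R u) \<le> d * inner z u"

locale region =
  fixes F :: "('a::{real_inner,complete_space} \<times> real) set set"
    and lam M B1 :: real and u :: 'a and g K :: real and Phi :: "'a \<Rightarrow> real"
  assumes ne: "\<forall>S\<in>F. cset S \<noteq> {}" and lam0: "0 \<le> lam" and lam2: "lam < 2"
    and cM: "\<forall>S\<in>F. \<exists>c\<in>cset S. norm c \<le> M"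
    and B1: "\<forall>S\<in>F. \<forall>(a,b)\<in>S. a \<noteq> 0 \<longrightarrow> \<bar>b\<bar> \<le> B1 * norm a"
    and M0: "0 \<le> M" and B10: "0 \<le> B1"
    and nu: "norm u = 1" and g0: "0 < g" and g1: "g \<le> 1/4"
    and gpos: "\<forall>S\<in>F. (\<exists>(a,b)\<in>S. 4*g*norm a \<le> inner a u \<and> a \<noteq> 0) \<or> (\<forall>(a,b)\<in>S. inner a u \<le> 0)"
    and gneg: "\<forall>S\<in>F. \<forall>(a,b)\<in>S. inner a u < 0 \<longrightarrow> 4*g*norm a \<le> - inner a u"
    and phi1: "\<And>y. norm y \<le> Phi y" and phi2: "\<And>y. Phi y \<le> norm y + K"
    and phi3: "\<And>y y'. Phi y \<le> Phi y' + norm (y - y')"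
    and phi4: "\<And>S \<mu> y. S \<in> F \<Longrightarrow> (\<forall>(a,b)\<in>S. inner a u \<le> 0) \<Longrightarrow> 0 \<le> \<mu> \<Longrightarrow> \<mu> \<le> lam
                 \<Longrightarrow> Phi (rp {(a,b)\<in>S. inner a u = 0} \<mu> y) \<le> Phi y"
begin

definition "ee = 2 - lam"
definition "kap = ee * g / 8"
definition "dl = kap / 8"
definition "aa = kap * dl"
definition "tt x = inner x u"
definition "yv x = x - tt x *\<^sub>R u"
definition "W x = tt x + kap * Phi (yv x)"
definition "inU x \<longleftrightarrow> norm (yv x) \<le> dl * tt x"
definition "T = max 1 (max (B1/g) (max (2*M/(g*ee)) (max (2*M/g) (max ((M+B1)/(3*g)) (3*K/kap)))))"

lemma K0: "0 \<le> K" using phi1[of 0] phi2[of 0] by simp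

lemma cst: "0 < ee" "ee \<le> 2" "0 < kap" "kap \<le> g/4" "kap \<le> 1/16" "0 < dl" "dl = kap/8" "dl \<le> g/32"
  "0 < aa" "aa \<le> 1/1000" "aa = kap * dl"
proof -
  show e: "0 < ee" "ee \<le> 2" unfolding ee_def using lam0 lam2 by auto
  show k: "0 < kap" unfolding kap_def using e g0 by simp
  show k2: "kap \<le> g/4" unfolding kap_def using e g0 by (simp add: mult_right_mono)
  thus k3: "kap \<le> 1/16" using g1 by simp
  show "0 < dl" "dl = kap/8" unfolding dl_def using k by auto
  show "dl \<le> g/32" unfolding dl_def using k2 by simp
  show "0 < aa" "aa = kap * dl" unfolding aa_def dl_def using k by auto
  have "kap * kap \<le> (1/16) * (1/16)" using k k3 by (intro mult_mono) auto
  thus "aa \<le> 1/1000" unfolding aa_def dl_def by simp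
qed

lemma decomp: "x = tt x *\<^sub>R u + yv x" unfolding yv_def by simp

lemma yv_orth: "inner (yv x) u = 0"
  unfolding yv_def tt_def using nu by (simp add: inner_diff_left power2_norm_eq_inner[symmetric])

lemma norm_decomp: "norm x ^ 2 = tt x ^ 2 + norm (yv x) ^ 2"
proof -
  have "norm x ^ 2 = norm (tt x *\<^sub>R u + yv x) ^ 2" using decomp[of x] by simp
  also have "\<dots> = tt x ^ 2 * inner u u + 2 * tt x * inner (yv x) u + inner (yv x) (yv x)"
    unfolding power2_norm_eq_inner by (simp add: inner_add_left inner_add_right inner_commute power2_eq_square algebra_simps)
  also have "\<dots> = tt x ^ 2 + norm (yv x) ^ 2"
    using yv_orth[of x] nu by (simp add: power2_norm_eq_inner[symmetric])
  finally show ?thesis .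
qed

lemma tt_le: "\<bar>tt x\<bar> \<le> norm x"
  unfolding tt_def using Cauchy_Schwarz_ineq2[of x u] nu by simp

lemma yv_le: "norm (yv x) \<le> norm x"
  using norm_decomp[of x] by (metis abs_norm_cancel le_add_same_cancel2 power2_le_iff_abs_le zero_le_power2 norm_ge_zero)

lemma tt_diff: "tt x' - tt x = tt (x' - x)" unfolding tt_def by (simp add: inner_diff_left)
lemma yv_diff: "yv x' - yv x = yv (x' - x)" unfolding yv_def tt_def by (simp add: inner_diff_left algebra_simps)

lemma inU_props: assumes "inU x" shows "0 \<le> tt x" "norm x \<le> 2 * tt x" "tt x \<le> W x"
proof -
  have d: "0 < dl" "dl \<le> 1" using cst by auto
  show t0: "0 \<le> tt x" using assms d unfolding inU_def by (metis norm_ge_zero order_trans zero_le_mult_iff not_le less_le)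
  have "norm x \<le> norm (tt x *\<^sub>R u) + norm (yv x)" using decomp[of x] norm_triangle_ineq by metis
  also have "\<dots> \<le> tt x + dl * tt x" using assms t0 nu unfolding inU_def by simp
  also have "\<dots> \<le> 2 * tt x" using d t0 mult_right_mono[of dl 1 "tt x"] by simp
  finally show "norm x \<le> 2 * tt x" .
  show "tt x \<le> W x" unfolding W_def using cst phi1[of "yv x"] by (simp add: order_trans[OF norm_ge_zero])
qed

lemma T_props: assumes "T \<le> t" shows "0 < t" "B1 \<le> g * t" "2 * M \<le> g * ee * t" "2 * M \<le> g * t"
  "M + B1 \<le> 3 * g * t" "3 * K \<le> kap * t"
proof -
  have e: "0 < ee" "0 < kap" using cst by auto
  have m: "1 \<le> t" "B1/g \<le> t" "2*M/(g*ee) \<le> t" "2*M/g \<le> t" "(M+B1)/(3*g) \<le> t" "3*K/kap \<le> t"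
    using assms unfolding T_def by auto
  show "0 < t" using m by simp
  show "B1 \<le> g * t" using m g0 by (simp add: pos_divide_le_eq mult.commute)
  show "2 * M \<le> g * ee * t" using m g0 e by (simp add: pos_divide_le_eq mult.commute mult.left_commute)
  show "2 * M \<le> g * t" using m g0 by (simp add: pos_divide_le_eq mult.commute)
  show "M + B1 \<le> 3 * g * t" using m g0 by (simp add: pos_divide_le_eq mult.commute mult.left_commute)
  show "3 * K \<le> kap * t" using m e by (simp add: pos_divide_le_eq mult.commute)
qed

lemma rp_diff: "rp S \<mu> x - x = \<mu> *\<^sub>R (proj (cset S) x - x)"
  unfolding rp_def by (simp add: algebra_simps)

lemma far_step:
  assumes S: "S \<in> F" and ab: "(a,b) \<in> S" "4*g*norm a \<le> inner a u" "a \<noteq> 0"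
    and x: "inU x" "T \<le> tt x" and mu: "0 \<le> \<mu>" "\<mu> \<le> lam"
  shows "norm (rp S \<mu> x) ^ 2 \<le> norm x ^ 2 - 8 * kap * tt x * norm (rp S \<mu> x - x)"
    and "tt (rp S \<mu> x) \<le> tt x - g * norm (rp S \<mu> x - x)"
proof -
  have neS: "cset S \<noteq> {}" using ne S by auto
  note cc = cset_closed cset_convex neS
  obtain c where c: "c \<in> cset S" "norm c \<le> M" using cM S by auto
  define p where "p = proj (cset S) x"
  define d where "d = norm (x - p)"
  define t where "t = tt x"
  define y where "y = yv x"
  note TP = T_props[OF x(2)]
  have t0: "0 < t" using TP unfolding t_def by simp
  have yb: "norm y \<le> dl * t" using x(1) unfolding inU_def y_def t_def .
  have dlg: "dl \<le> g/32" "0 < dl" using cst by auto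
  have pC: "p \<in> cset S" unfolding p_def by (rule proj_in[OF cc])
  hence pb: "inner a p \<le> b" using ab(1) unfolding cset_def by auto
  have bB: "\<bar>b\<bar> \<le> B1 * norm a" using B1 S ab by auto
  have na: "norm a > 0" using ab(3) by simp
  have s_eq: "norm (rp S \<mu> x - x) = \<mu> * d"
    unfolding rp_diff d_def p_def using mu by (simp add: norm_minus_commute)
  have "inner a x = t * inner a u + inner a y"
    using decomp[of x] unfolding t_def y_def by (metis inner_add_right inner_scaleR_right)
  moreover have "\<bar>inner a y\<bar> \<le> norm a * (dl * t)"
    using Cauchy_Schwarz_ineq2[of a y] yb na by (meson mult_left_mono norm_ge_zero order_trans)
  moreover have "norm a * (dl * t) \<le> norm a * (g * t)"
    using dlg t0 na by (intro mult_left_mono mult_right_mono) auto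
  moreover have "t * (4*g*norm a) \<le> t * inner a u" using ab(2) t0 by (intro mult_left_mono) auto
  ultimately have ax: "inner a x \<ge> 3 * g * norm a * t" by (simp add: abs_le_iff algebra_simps)
  have "inner a (x - p) \<le> norm a * d" using Cauchy_Schwarz_ineq2[of a "x - p"] unfolding d_def by simp
  hence "3 * g * norm a * t - B1 * norm a \<le> norm a * d" using ax pb bB by (simp add: inner_diff_right abs_le_iff)
  hence "norm a * (3 * g * t - B1) \<le> norm a * d" by (simp add: algebra_simps)
  hence "3 * g * t - B1 \<le> d" using na by simp
  hence d2: "2 * g * t \<le> d" using TP unfolding t_def by simp
  have d0: "0 \<le> d" unfolding d_def by simp
  have rn: "norm (rp S \<mu> x) ^ 2 \<le> norm x ^ 2 + \<mu> * d * (2 * norm c - (2 - \<mu>) * d)"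
    using rp_norm[OF neS c(1) mu(1), of x] unfolding d_def p_def .
  have "2 * norm c - (2 - \<mu>) * d \<le> 2 * M - ee * d"
    using c(2) mu d0 mult_right_mono[of "2 - lam" "2 - \<mu>" d] unfolding ee_def by linarith
  also have "\<dots> \<le> - (ee * d) / 2"
  proof -
    have "2 * M \<le> g * ee * t" using TP unfolding t_def by simp
    moreover have "ee * (2 * g * t) \<le> ee * d" using d2 cst by (intro mult_left_mono) auto
    ultimately show ?thesis by (simp add: algebra_simps)
  qed
  also have "\<dots> \<le> - ee * g * t"
  proof -
    have "ee * (2 * g * t) \<le> ee * d" using d2 cst by (intro mult_left_mono) auto
    thus ?thesis by (simp add: algebra_simps)
  qed
  finally have F1: "\<mu> * d * (2 * norm c - (2 - \<mu>) * d) \<le> \<mu> * d * (- ee * g * t)"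
    using mu d0 by (intro mult_left_mono) auto
  have E1: "\<mu> * d * (- ee * g * t) = - (8 * kap * t * (\<mu> * d))" unfolding kap_def by (simp add: algebra_simps)
  from F1 E1 have "\<mu> * d * (2 * norm c - (2 - \<mu>) * d) \<le> - (8 * kap * t * (\<mu> * d))" by linarith
  thus "norm (rp S \<mu> x) ^ 2 \<le> norm x ^ 2 - 8 * kap * tt x * norm (rp S \<mu> x - x)"
    using rn unfolding s_eq t_def by linarith
  have vx: "inner (x - p) x \<ge> d^2 - d * M"
  proof -
    have "inner (x - p) x \<ge> d^2 - d * norm c" using vi_x[OF neS c(1), of x] unfolding d_def p_def .
    moreover have "d * norm c \<le> d * M" using c(2) d0 by (intro mult_left_mono)
    ultimately show ?thesis by simp
  qed
  have "inner (x - p) x = t * inner (x - p) u + inner (x - p) y"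
    using decomp[of x] unfolding t_def y_def by (metis inner_add_right inner_scaleR_right)
  moreover have "inner (x - p) y \<le> d * (dl * t)"
    using Cauchy_Schwarz_ineq2[of "x - p" y] yb d0 unfolding d_def by (meson abs_le_iff mult_left_mono norm_ge_zero order_trans)
  ultimately have "t * inner (x - p) u \<ge> d^2 - d * M - d * (dl * t)" using vx by simp
  moreover have "d^2 - d * M - d * (dl * t) \<ge> d * (g * t)"
  proof -
    have "g * t \<le> d - M - dl * t"
    proof -
      have h0: "dl * t \<le> (g/32) * t" using dlg t0 by (intro mult_right_mono) auto
      have h: "dl * t \<le> (g * t) / 32" using h0 by simp
      have gt0: "0 \<le> g * t" using g0 t0 by simp
      have "2 * M \<le> g * t" using TP unfolding t_def by simp
      thus ?thesis using h d2 gt0 by linarith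
    qed
    hence "d * (g * t) \<le> d * (d - M - dl * t)" using d0 by (intro mult_left_mono)
    thus ?thesis by (simp add: power2_eq_square algebra_simps)
  qed
  ultimately have "t * (g * d) \<le> t * inner (x - p) u" by (simp add: algebra_simps)
  hence xpu: "g * d \<le> inner (x - p) u" using t0 by simp
  have "tt (rp S \<mu> x) = t - \<mu> * inner (x - p) u"
    unfolding tt_def t_def rp_def p_def by (simp add: inner_add_left inner_diff_left algebra_simps)
  also have "\<dots> \<le> t - \<mu> * (g * d)" using xpu mu by (simp add: mult_left_mono)
  finally show "tt (rp S \<mu> x) \<le> tt x - g * norm (rp S \<mu> x - x)" using s_eq unfolding t_def by (simp add: algebra_simps)
qed

lemma g_step:
  assumes S: "S \<in> F" and rec: "\<forall>(a,b)\<in>S. inner a u \<le> 0" and x: "inU x" "T \<le> tt x"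
  defines "Su \<equiv> {(a,b)\<in>S. inner a u = 0}"
  shows "rp S \<mu> x = rp Su \<mu> x" "tt (rp S \<mu> x) = tt x" "yv (rp S \<mu> x) = rp Su \<mu> (yv x)"
proof -
  have neS: "cset S \<noteq> {}" using ne S by auto
  have sub: "cset S \<subseteq> cset Su" unfolding cset_def Su_def by auto
  hence neSu: "cset Su \<noteq> {}" using neS by auto
  note ccu = cset_closed cset_convex neSu
  have orthu: "\<forall>(a,b)\<in>Su. inner a (r *\<^sub>R u) = 0" for r unfolding Su_def by auto
  obtain c where c: "c \<in> cset S" "norm c \<le> M" using cM S by auto
  define t where "t = tt x"
  define y where "y = yv x"
  define pu where "pu = proj (cset Su) x"
  note TP = T_props[OF x(2), folded t_def]
  have t0: "0 < t" using TP by simp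
  have yb: "norm y \<le> dl * t" using x(1) unfolding inU_def y_def t_def .
  have dlg: "dl \<le> g/32" "0 < dl" using cst by auto
  have cw: "c + t *\<^sub>R u \<in> cset Su" using cset_translate[OF orthu[of t]] c(1) sub by blast
  have dp1: "dist x pu \<le> dist x (c + t *\<^sub>R u)" unfolding pu_def by (rule proj_min[OF ccu cw])
  have e: "x - (c + t *\<^sub>R u) = y - c" using decomp[of x] unfolding y_def t_def by (simp add: algebra_simps)
  have "dist x (c + t *\<^sub>R u) \<le> norm y + norm c" unfolding dist_norm e by (rule norm_triangle_ineq4)
  with dp1 have dpu: "norm (pu - x) \<le> dl * t + M" using yb c(2) by (simp add: dist_norm norm_minus_commute)
  have puSu: "pu \<in> cset Su" unfolding pu_def by (rule proj_in[OF ccu])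
  have puS: "pu \<in> cset S"
    unfolding cset_def
  proof (clarsimp)
    fix a b assume ab: "(a, b) \<in> S"
    show "inner a pu \<le> b"
    proof (cases "inner a u = 0")
      case True
      hence "(a,b) \<in> Su" using ab unfolding Su_def by auto
      thus ?thesis using puSu unfolding cset_def by auto
    next
      case False
      hence neg: "inner a u < 0" using rec ab by fastforce
      hence g4: "4*g*norm a \<le> - inner a u" using gneg S ab by auto
      have na: "a \<noteq> 0" using neg by auto
      hence bB: "\<bar>b\<bar> \<le> B1 * norm a" using B1 S ab by auto
      have "inner a x = t * inner a u + inner a y"
        using decomp[of x] unfolding t_def y_def by (metis inner_add_right inner_scaleR_right)
      hence "inner a pu = t * inner a u + inner a y + inner a (pu - x)"
        by (simp add: inner_diff_right)
      moreover have "inner a y \<le> norm a * (dl * t)"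
        using Cauchy_Schwarz_ineq2[of a y] yb by (meson abs_le_iff mult_left_mono norm_ge_zero order_trans)
      moreover have "inner a (pu - x) \<le> norm a * (dl * t + M)"
        using Cauchy_Schwarz_ineq2[of a "pu - x"] dpu by (meson abs_le_iff mult_left_mono norm_ge_zero order_trans)
      moreover have "t * (4*g*norm a) \<le> t * (- inner a u)" using g4 t0 by (intro mult_left_mono) auto
      ultimately have "inner a pu \<le> norm a * (2 * dl * t + M - 4 * g * t)" by (simp add: algebra_simps)
      also have "\<dots> \<le> norm a * (- B1)"
      proof (intro mult_left_mono)
        have "dl * t \<le> (g/32) * t" using dlg t0 by (intro mult_right_mono) auto
        hence h: "2 * dl * t \<le> (g * t) / 16" by simp
        have "0 \<le> g * t" using g0 t0 by simp
        moreover have "M + B1 \<le> 3 * (g * t)" using TP by simp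
        ultimately show "2 * dl * t + M - 4 * g * t \<le> - B1" using h by linarith
      qed simp
      also have "\<dots> \<le> b" using bB by (simp add: abs_le_iff mult.commute)
      finally show ?thesis .
    qed
  qed
  have eqp: "proj (cset S) x = pu"
  proof (rule proj_eqI[OF cset_convex puS], intro ballI)
    fix z assume "z \<in> cset S"
    thus "dist x pu \<le> dist x z" unfolding pu_def using sub by (intro proj_min[OF ccu]) auto
  qed
  show e1: "rp S \<mu> x = rp Su \<mu> x" unfolding rp_def eqp pu_def ..
  have orth: "inner (x - pu) u = 0" unfolding pu_def
    by (rule proj_orth[OF neSu]) (auto simp: Su_def)
  show "tt (rp S \<mu> x) = tt x" unfolding e1 tt_def rp_def pu_def[symmetric]
    using orth eqp by (simp add: inner_add_left inner_diff_left algebra_simps)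
  have "rp Su \<mu> x = rp Su \<mu> (yv x + t *\<^sub>R u)" using decomp[of x] unfolding t_def by (simp add: add.commute)
  also have "\<dots> = rp Su \<mu> (yv x) + t *\<^sub>R u" by (rule rp_translate[OF neSu orthu])
  finally have "rp Su \<mu> x = rp Su \<mu> (yv x) + t *\<^sub>R u" .
  moreover have "tt (rp Su \<mu> x) = t" using \<open>tt (rp S \<mu> x) = tt x\<close> e1 unfolding t_def by simp
  ultimately show "yv (rp S \<mu> x) = rp Su \<mu> (yv x)" unfolding e1 yv_def by simp
qed

lemma aa_eq: "aa = kap * (kap/8)" using cst by simp

lemma region_step:
  assumes S: "S \<in> F" and x: "inU x" "T \<le> tt x" and mu: "0 \<le> \<mu>" "\<mu> \<le> lam"
  shows "(inU (rp S \<mu> x) \<and> W (rp S \<mu> x) \<le> W x) \<or>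
         (\<not> inU (rp S \<mu> x) \<and> norm (rp S \<mu> x) \<le> (1 - aa/4) * W x)"
proof -
  define x' where "x' = rp S \<mu> x"
  define t where "t = tt x"
  define y where "y = yv x"
  define q where "q = norm y"
  note TP = T_props[OF x(2), folded t_def]
  have t0: "0 < t" using TP by simp
  have yb: "q \<le> dl * t" using x(1) unfolding inU_def y_def t_def q_def .
  have q0: "0 \<le> q" unfolding q_def by simp
  have k: "0 < kap" "kap \<le> 1/16" "kap \<le> g/4" "dl = kap/8" "0 < dl" using cst by auto
  have Wx: "W x = t + kap * Phi y" unfolding W_def t_def y_def ..
  have Wlow: "t + kap * q \<le> W x" unfolding Wx q_def using phi1[of y] k by simp
  have aa1: "0 \<le> 1 - aa/4" using cst by simp
  from gpos S consider (far) a b where "(a,b) \<in> S" "4*g*norm a \<le> inner a u" "a \<noteq> 0"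
    | (rec) "\<forall>(a,b)\<in>S. inner a u \<le> 0" by blast
  thus ?thesis
  proof cases
    case far
    define s where "s = norm (x' - x)"
    have F1: "norm x' ^ 2 \<le> norm x ^ 2 - 8 * kap * t * s"
      using far_step(1)[OF S far x mu] unfolding x'_def s_def t_def .
    have F2: "tt x' \<le> t - g * s" using far_step(2)[OF S far x mu] unfolding x'_def s_def t_def .
    have s0: "0 \<le> s" unfolding s_def by simp
    have yy: "norm (yv x' - y) \<le> s" unfolding y_def yv_diff s_def by (rule yv_le)
    have ph: "Phi (yv x') \<le> Phi y + s" using phi3[of "yv x'" y] yy by simp
    have WW: "W x' \<le> W x"
    proof -
      have "W x' \<le> t - g * s + kap * (Phi y + s)" unfolding W_def using F2 ph k by (simp add: mult_left_mono add_mono)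
      also have "\<dots> \<le> W x" unfolding Wx using k g0 s0 mult_right_mono[of kap g s] by (simp add: algebra_simps)
      finally show ?thesis .
    qed
    show ?thesis
    proof (cases "inU x'")
      case True thus ?thesis using WW unfolding x'_def by simp
    next
      case False
      hence out: "dl * tt x' < norm (yv x')" unfolding inU_def by simp
      have "tt x' - t \<ge> - s" unfolding t_def tt_diff s_def using tt_le[of "x' - x"] by simp
      hence "dl * (t - s) \<le> dl * tt x'" using k by (intro mult_left_mono) auto
      moreover have "norm (yv x') \<le> q + s" using yy norm_triangle_sub[of "yv x'" y] unfolding q_def by linarith
      ultimately have "dl * t - q \<le> s * (1 + dl)" using out by (simp add: algebra_simps)
      also have "\<dots> \<le> s * 2" using s0 k by (intro mult_left_mono) auto
      finally have s2: "dl * t - q \<le> 2 * s" by simp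
      have "norm x' ^ 2 \<le> t^2 + q^2 - 8 * kap * t * s"
        using F1 norm_decomp[of x] unfolding t_def q_def y_def by simp
      also have "\<dots> \<le> t^2 + q^2 - 4 * kap * t * (dl * t - q)"
      proof -
        have "(4 * kap * t) * (dl * t - q) \<le> (4 * kap * t) * (2 * s)" using s2 k(1) t0 by (intro mult_left_mono) auto
        thus ?thesis by (simp add: algebra_simps)
      qed
      also have "\<dots> \<le> ((1 - aa/4) * (t + kap * q))^2"
      proof -
        have yb': "q \<le> (kap/8) * t" using yb k(4) by simp
        show ?thesis using A1[OF k(1) k(2) _ q0 yb'] t0 unfolding aa_eq k(4) by simp
      qed
      also have "\<dots> \<le> ((1 - aa/4) * W x)^2"
        using Wlow aa1 k q0 t0 by (intro power_mono mult_left_mono) auto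
      finally have "norm x' ^ 2 \<le> ((1 - aa/4) * W x)^2" .
      moreover have "0 \<le> (1 - aa/4) * W x" using aa1 Wlow k q0 t0
        by (metis add_nonneg_nonneg less_imp_le mult_nonneg_nonneg order_trans)
      ultimately have "norm x' \<le> (1 - aa/4) * W x" by (simp add: power2_le_iff_abs_le)
      thus ?thesis using False unfolding x'_def by simp
    qed
  next
    case rec
    define Su where "Su = {(a,b)\<in>S. inner a u = 0}"
    have G: "tt x' = t" "yv x' = rp Su \<mu> y"
      using g_step(2,3)[OF S rec x, of \<mu>] unfolding x'_def t_def y_def Su_def by auto
    have ph: "Phi (yv x') \<le> Phi y" unfolding G(2) Su_def by (rule phi4[OF S rec mu])
    have WW: "W x' \<le> W x" unfolding Wx unfolding W_def G(1) using ph k by (simp add: mult_left_mono)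
    show ?thesis
    proof (cases "inU x'")
      case True thus ?thesis using WW unfolding x'_def by simp
    next
      case False
      define Y where "Y = norm (yv x')"
      have out: "dl * t < Y" using False unfolding inU_def Y_def G(1) by simp
      have "Y \<le> Phi y" using phi1[of "yv x'"] ph unfolding Y_def by simp
      also have "\<dots> \<le> q + K" using phi2[of y] unfolding q_def .
      also have "\<dots> \<le> kap * t / 2"
      proof -
        have "dl * t = (kap * t) / 8" using k by simp
        moreover have "3 * K \<le> kap * t" using TP by simp
        moreover have "0 \<le> kap * t" using k t0 by simp
        ultimately show ?thesis using yb by linarith
      qed
      finally have Yb: "Y \<le> kap * t / 2" .
      have "norm x' ^ 2 = t^2 + Y^2" using norm_decomp[of x'] unfolding G(1) Y_def .
      also have "\<dots> \<le> ((1 - aa/4) * (t + kap * Y))^2"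
      proof -
        have o': "(kap/8) * t \<le> Y" using out k(4) by simp
        show ?thesis using A2[OF k(1) k(2) _ o' Yb] t0 unfolding aa_eq by simp
      qed
      also have "\<dots> \<le> ((1 - aa/4) * W x)^2"
      proof -
        have "t + kap * Y \<le> W x" unfolding Wx using \<open>Y \<le> Phi y\<close> k by simp
        moreover have "0 \<le> t + kap * Y" using t0 k unfolding Y_def by simp
        ultimately show ?thesis using aa1 by (intro power_mono mult_left_mono) auto
      qed
      finally have "norm x' ^ 2 \<le> ((1 - aa/4) * W x)^2" .
      moreover have "0 \<le> (1 - aa/4) * W x" using aa1 Wlow k q0 t0
        by (metis add_nonneg_nonneg less_imp_le mult_nonneg_nonneg order_trans)
      ultimately have "norm x' \<le> (1 - aa/4) * W x" by (simp add: power2_le_iff_abs_le)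
      thus ?thesis using False unfolding x'_def by simp
    qed
  qed
qed

lemma core_bound:
  assumes "norm (yv x) \<le> (dl/8) * tt x" "0 \<le> tt x"
  shows "inU x" "W x \<le> (1 + aa/8) * norm x + kap * K"
proof -
  have k: "0 < kap" "0 < dl" using cst by auto
  have "(dl/8) * tt x \<le> dl * tt x" using assms k by (intro mult_right_mono) auto
  thus "inU x" unfolding inU_def using assms by linarith
  have "W x \<le> tt x + kap * (norm (yv x) + K)" unfolding W_def using phi2[of "yv x"] k by (simp add: mult_left_mono)
  also have "\<dots> \<le> tt x + kap * ((dl/8) * tt x + K)" using assms k by (simp add: mult_left_mono)
  also have "\<dots> = (1 + aa/8) * tt x + kap * K" unfolding aa_eq using cst by (simp add: algebra_simps)
  also have "\<dots> \<le> (1 + aa/8) * norm x + kap * K"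
    using tt_le[of x] assms cst by (intro add_right_mono mult_left_mono) auto
  finally show "W x \<le> (1 + aa/8) * norm x + kap * K" .
qed

lemma kap_eq: "kap = (2 - lam) * g / 8" unfolding kap_def ee_def ..
lemma dl_eq: "dl = (2 - lam) * g / 8 / 8" unfolding dl_def kap_eq ..
lemma aa_eq2: "aa = ((2 - lam) * g / 8) * ((2 - lam) * g / 8 / 8)" unfolding aa_def dl_eq kap_eq ..
lemma W_eq: "W z = Wg u ((2 - lam) * g / 8) Phi z" unfolding W_def Wg_def kap_eq yv_def tt_def ..
lemma U_eq: "inU z = Ug u ((2 - lam) * g / 8 / 8) z" unfolding inU_def Ug_def dl_eq yv_def tt_def ..

lemma glob:
  "\<exists>T>0. \<forall>z S \<mu>. Ug u ((2 - lam) * g / 8 / 8) z \<longrightarrow> T \<le> inner z u \<longrightarrow> S \<in> F \<longrightarrow> 0 \<le> \<mu> \<longrightarrow> \<mu> \<le> lam \<longrightarrow>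
     (Ug u ((2 - lam) * g / 8 / 8) (rp S \<mu> z) \<and> Wg u ((2 - lam) * g / 8) Phi (rp S \<mu> z) \<le> Wg u ((2 - lam) * g / 8) Phi z) \<or>
     (\<not> Ug u ((2 - lam) * g / 8 / 8) (rp S \<mu> z) \<and>
        norm (rp S \<mu> z) \<le> (1 - ((2 - lam) * g / 8) * ((2 - lam) * g / 8 / 8) / 4) * Wg u ((2 - lam) * g / 8) Phi z)"
proof (intro exI[of _ T] conjI allI impI)
  show "0 < T" using T_props[of T] by simp
  fix z S \<mu> assume "Ug u ((2 - lam) * g / 8 / 8) z" "T \<le> inner z u" "S \<in> F" "0 \<le> \<mu>" "\<mu> \<le> lam"
  thus "(Ug u ((2 - lam) * g / 8 / 8) (rp S \<mu> z) \<and> Wg u ((2 - lam) * g / 8) Phi (rp S \<mu> z) \<le> Wg u ((2 - lam) * g / 8) Phi z) \<or>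
     (\<not> Ug u ((2 - lam) * g / 8 / 8) (rp S \<mu> z) \<and>
        norm (rp S \<mu> z) \<le> (1 - ((2 - lam) * g / 8) * ((2 - lam) * g / 8 / 8) / 4) * Wg u ((2 - lam) * g / 8) Phi z)"
    using region_step[of S z \<mu>] unfolding U_eq W_eq aa_eq2 tt_def by simp
qed

lemma glob_U:
  assumes "Ug u ((2 - lam) * g / 8 / 8) z"
  shows "0 \<le> inner z u" "norm z \<le> 2 * inner z u" "inner z u \<le> Wg u ((2 - lam) * g / 8) Phi z"
  using inU_props[of z] assms unfolding U_eq W_eq tt_def by auto

lemma glob_core:
  assumes "norm (z - inner z u *\<^sub>R u) \<le> ((2 - lam) * g / 8 / 8 / 8) * inner z u" "0 \<le> inner z u"
  shows "Ug u ((2 - lam) * g / 8 / 8) z"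
    "Wg u ((2 - lam) * g / 8) Phi z \<le> (1 + ((2 - lam) * g / 8) * ((2 - lam) * g / 8 / 8) / 8) * norm z + ((2 - lam) * g / 8) * K"
  using core_bound[of z] assms unfolding U_eq W_eq aa_eq2 kap_eq yv_def tt_def dl_eq by auto

lemma glob_consts: "0 < (2 - lam) * g / 8" "(2 - lam) * g / 8 \<le> 1/16"
  "((2 - lam) * g / 8) * ((2 - lam) * g / 8 / 8) \<le> 1/1000" "0 < ((2 - lam) * g / 8) * ((2 - lam) * g / 8 / 8)"
  using cst unfolding aa_eq2 kap_eq by auto

end


lemma exists_g:
  fixes A :: "'a::real_inner set"
  assumes "finite A"
  shows "\<exists>g>0. g \<le> 1/4 \<and> (\<forall>a\<in>A. inner a u \<noteq> 0 \<longrightarrow> 4 * g * norm a \<le> \<bar>inner a u\<bar>)"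
proof -
  define Q where "Q = insert (1/4) ((\<lambda>a. \<bar>inner a u\<bar> / (4 * norm a)) ` {a\<in>A. inner a u \<noteq> 0})"
  have fQ: "finite Q" "Q \<noteq> {}" unfolding Q_def using assms by auto
  have pQ: "\<forall>q\<in>Q. 0 < q" unfolding Q_def by (auto intro!: divide_pos_pos)
  define g where "g = Min Q"
  have g0: "0 < g" unfolding g_def using fQ pQ by auto
  have g1: "g \<le> 1/4" unfolding g_def using fQ by (intro Min_le) (auto simp: Q_def)
  have "4 * g * norm a \<le> \<bar>inner a u\<bar>" if a: "a \<in> A" "inner a u \<noteq> 0" for a
  proof -
    have "a \<noteq> 0" using a(2) by auto
    hence na: "0 < norm a" by simp
    have "g \<le> \<bar>inner a u\<bar> / (4 * norm a)" unfolding g_def using fQ a by (intro Min_le) (auto simp: Q_def)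
    thus ?thesis using na by (simp add: pos_le_divide_eq mult.commute mult.left_commute)
  qed
  thus ?thesis using g0 g1 by blast
qed

lemma proj_span:
  fixes z :: "'a::{real_inner,complete_space}"
  assumes E: "finite E" "orthonormal E" and S: "\<forall>(a,b)\<in>S. a \<in> span E" and ne: "cset S \<noteq> {}"
    and z: "z \<in> span E"
  shows "proj (cset S) z \<in> span E"
proof -
  note cc = cset_closed cset_convex ne
  define p where "p = proj (cset S) z"
  define p' where "p' = pN E p"
  have pC: "p \<in> cset S" unfolding p_def by (rule proj_in[OF cc])
  have orth: "inner (p - p') v = 0" if "v \<in> span E" for v unfolding p'_def by (rule pN_orth[OF E that])
  have w: "\<forall>(a,b)\<in>S. inner a (p' - p) = 0"
  proof (clarify)
    fix a b assume "(a, b) \<in> S"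
    hence "a \<in> span E" using S by auto
    hence "inner (p - p') a = 0" by (rule orth)
    thus "inner a (p' - p) = 0" by (simp add: inner_commute inner_diff_left inner_diff_right)
  qed
  have p'C: "p' \<in> cset S" using cset_translate[OF w, of p] pC by simp
  have p'E: "p' \<in> span E" unfolding p'_def by (rule pN_span[OF E(1)])
  have "z - p' \<in> span E" using z p'E by (rule span_diff)
  hence o2: "inner (p - p') (z - p') = 0" by (rule orth)
  have "dist z p ^ 2 = dist z p' ^ 2 + norm (p - p') ^ 2"
    unfolding dist_norm power2_norm_eq_inner using o2
    by (simp add: inner_diff_left inner_diff_right inner_commute algebra_simps)
  hence "dist z p' ^ 2 \<le> dist z p ^ 2" by simp
  hence "dist z p' \<le> dist z p" by (simp add: power2_le_iff_abs_le)
  hence "\<forall>y\<in>cset S. dist z p' \<le> dist z y" using proj_min[OF cc] unfolding p_def by (meson order_trans)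
  hence "proj (cset S) z = p'" by (rule proj_eqI[OF cset_convex p'C])
  thus ?thesis using p'E by simp
qed

lemma rp_span:
  fixes z :: "'a::{real_inner,complete_space}"
  assumes "finite E" "orthonormal E" "\<forall>(a,b)\<in>S. a \<in> span E" "cset S \<noteq> {}" "z \<in> span E"
  shows "rp S \<mu> z \<in> span E"
  unfolding rp_def using proj_span[OF assms] assms(5) by (intro span_add span_scale)

lemma core_cover:
  fixes u z :: "'a::real_inner"
  assumes u: "norm u = 1" and z: "z \<noteq> 0" and d: "0 < d" "d \<le> 1"
    and c: "norm (z /\<^sub>R norm z - u) < d / 32"
  shows "norm (z - inner z u *\<^sub>R u) \<le> (d/8) * inner z u" "0 \<le> inner z u"
proof -
  define v where "v = z /\<^sub>R norm z"
  define r where "r = norm z"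
  have r: "0 < r" unfolding r_def using z by simp
  have zv: "z = r *\<^sub>R v" unfolding v_def r_def using z by simp
  have uu: "inner u u = 1" using u by (simp add: power2_norm_eq_inner[symmetric])
  have e1: "1 - inner v u = inner (u - v) u" using uu by (simp add: inner_diff_left)
  have "\<bar>inner (u - v) u\<bar> \<le> norm (u - v)" using Cauchy_Schwarz_ineq2[of "u - v" u] u by simp
  hence t1: "\<bar>1 - inner v u\<bar> \<le> norm (v - u)" using e1 by (simp add: norm_minus_commute)
  have "v - inner v u *\<^sub>R u = (v - u) + (1 - inner v u) *\<^sub>R u" by (simp add: algebra_simps)
  hence "norm (v - inner v u *\<^sub>R u) \<le> norm (v - u) + norm ((1 - inner v u) *\<^sub>R u)"
    using norm_triangle_ineq[of "v - u" "(1 - inner v u) *\<^sub>R u"] by metis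
  hence "norm (v - inner v u *\<^sub>R u) \<le> norm (v - u) + \<bar>1 - inner v u\<bar>" using u by simp
  hence yb: "norm (v - inner v u *\<^sub>R u) \<le> 2 * norm (v - u)" using t1 by simp
  have cv: "norm (v - u) < d/32" using c unfolding v_def .
  have tv: "1/2 \<le> inner v u" using t1 cv d by (simp add: abs_le_iff)
  have "norm (v - inner v u *\<^sub>R u) \<le> (d/8) * inner v u"
  proof -
    have "(d/8) * (1/2) \<le> (d/8) * inner v u" using tv d by (intro mult_left_mono) auto
    thus ?thesis using yb cv by simp
  qed
  hence "r * norm (v - inner v u *\<^sub>R u) \<le> r * ((d/8) * inner v u)" using r by (intro mult_left_mono) auto
  moreover have "norm (z - inner z u *\<^sub>R u) = r * norm (v - inner v u *\<^sub>R u)"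
  proof -
    have "z - inner z u *\<^sub>R u = r *\<^sub>R (v - inner v u *\<^sub>R u)" unfolding zv by (simp add: algebra_simps)
    thus ?thesis using r by simp
  qed
  moreover have "inner z u = r * inner v u" unfolding zv by simp
  ultimately show "norm (z - inner z u *\<^sub>R u) \<le> (d/8) * inner z u" by (simp add: algebra_simps)
  show "0 \<le> inner z u" unfolding zv using r tv by simp
qed


lemma rp_diff_g: "rp S \<mu> x - x = \<mu> *\<^sub>R (proj (cset S) x - x)"
  unfolding rp_def by (simp add: algebra_simps)

theorem main_bound:
  fixes F :: "('a::{real_inner,complete_space} \<times> real) set set"
  assumes "finite F" "\<forall>S\<in>F. finite S \<and> cset S \<noteq> {}" "0 \<le> lam" "lam < 2"
  shows "\<exists>K. \<forall>x z. reach F lam x z \<longrightarrow> norm z \<le> norm x + K"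
  using assms
proof (induction "card (fst ` \<Union>F)" arbitrary: F rule: less_induct)
  case less
  note finF = less.prems(1) and finS = less.prems(2) and lam0 = less.prems(3) and lam2 = less.prems(4)
  define A where "A = fst ` \<Union>F"
  have finA: "finite A" unfolding A_def using finF finS by auto
  have neF: "\<forall>S\<in>F. cset S \<noteq> {}" using finS by auto
  have "\<forall>S\<in>F. \<exists>c. c \<in> cset S" using neF by auto
  then obtain cf where cf: "\<forall>S\<in>F. cf S \<in> cset S" by metis
  define M where "M = (\<Sum>S\<in>F. norm (cf S))"
  have M0: "0 \<le> M" unfolding M_def by (simp add: sum_nonneg)
  have cM: "\<forall>S\<in>F. \<exists>c\<in>cset S. norm c \<le> M"
  proof
    fix S assume S: "S \<in> F"
    have "norm (cf S) \<le> M" unfolding M_def using finF S by (intro member_le_sum) auto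
    thus "\<exists>c\<in>cset S. norm c \<le> M" using cf S by auto
  qed
  define B1 where "B1 = (\<Sum>p\<in>\<Union>F. \<bar>snd p\<bar> / norm (fst p))"
  have finU: "finite (\<Union>F)" using finF finS by auto
  have B10: "0 \<le> B1" unfolding B1_def by (simp add: sum_nonneg)
  have B1: "\<forall>S\<in>F. \<forall>(a,b)\<in>S. a \<noteq> 0 \<longrightarrow> \<bar>b\<bar> \<le> B1 * norm a"
  proof (intro ballI, clarify)
    fix S a b assume S: "S \<in> F" and ab: "(a, b) \<in> S" and a: "a \<noteq> 0"
    have "\<bar>b\<bar> / norm a \<le> B1" unfolding B1_def using finU S ab
      by (intro member_le_sum[of "(a,b)" "\<Union>F" "\<lambda>p. \<bar>snd p\<bar> / norm (fst p)", simplified]) auto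
    thus "\<bar>b\<bar> \<le> B1 * norm a" using a by (simp add: pos_divide_le_eq)
  qed
  obtain E where E: "finite E" "orthonormal E" "span E = span A" using gram_schmidt[OF finA] by auto
  define Sph where "Sph = {x \<in> span E. norm x = 1}"
  have cSph: "compact Sph" unfolding Sph_def by (rule compact_sphere_span[OF E(1,2)])
  define G where "G u = (\<lambda>S. {(a,b)\<in>S. inner a u = 0}) ` {S\<in>F. \<forall>(a,b)\<in>S. inner a u \<le> 0}" for u
  have G_ne: "\<forall>S\<in>G u. cset S \<noteq> {}" for u
  proof
    fix S' assume "S' \<in> G u"
    then obtain S where S: "S \<in> F" "S' = {(a,b)\<in>S. inner a u = 0}" unfolding G_def by auto
    have "cset S \<subseteq> cset S'" unfolding S(2) cset_def by auto
    thus "cset S' \<noteq> {}" using neF S(1) by auto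
  qed
  have IH: "\<exists>K. \<forall>x z. reach (G u) lam x z \<longrightarrow> norm z \<le> norm x + K" if u: "u \<in> Sph" for u
  proof (rule less.hyps)
    show "finite (G u)" unfolding G_def using finF by auto
    show "\<forall>S\<in>G u. finite S \<and> cset S \<noteq> {}"
    proof
      fix S' assume S': "S' \<in> G u"
      then obtain S where S: "S \<in> F" "S' = {(a,b)\<in>S. inner a u = 0}" unfolding G_def by auto
      have "S' \<subseteq> S" unfolding S(2) by auto
      moreover have "finite S" using finS S(1) by blast
      ultimately have "finite S'" by (rule finite_subset)
      moreover have "cset S' \<noteq> {}" using G_ne[of u] S' by blast
      ultimately show "finite S' \<and> cset S' \<noteq> {}" by blast
    qed
    show "0 \<le> lam" "lam < 2" using lam0 lam2 by auto
    have sub: "fst ` \<Union>(G u) \<subseteq> {a\<in>A. inner a u = 0}"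
    proof
      fix a assume "a \<in> fst ` \<Union>(G u)"
      then obtain b S' where "(a,b) \<in> S'" "S' \<in> G u" by force
      then obtain S where S: "S \<in> F" "(a,b) \<in> S" "inner a u = 0" unfolding G_def by auto
      thus "a \<in> {a\<in>A. inner a u = 0}" unfolding A_def by force
    qed
    have "\<exists>a\<in>A. inner a u \<noteq> 0"
    proof (rule ccontr)
      assume "\<not> ?thesis"
      hence "\<forall>a\<in>A. inner u a = 0" by (simp add: inner_commute)
      moreover have "u \<in> span A" using u E(3) unfolding Sph_def by auto
      ultimately have "inner u u = 0" by (rule orth_span)
      thus False using u unfolding Sph_def by simp
    qed
    hence "{a\<in>A. inner a u = 0} \<subset> A" by blast
    with sub have "fst ` \<Union>(G u) \<subset> A" by (rule subset_psubset_trans)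
    from psubset_card_mono[OF finA this] show "card (fst ` \<Union>(G u)) < card (fst ` \<Union>F)" unfolding A_def .
  qed
  hence "\<forall>u\<in>Sph. \<exists>K. \<forall>x z. reach (G u) lam x z \<longrightarrow> norm z \<le> norm x + K" by blast
  then obtain Kf where Kf: "\<forall>u\<in>Sph. \<forall>x z. reach (G u) lam x z \<longrightarrow> norm z \<le> norm x + Kf u"
    by (rule bchoice[THEN exE]) blast
  obtain gf where gf: "\<forall>u. 0 < gf u \<and> gf u \<le> 1/4 \<and> (\<forall>a\<in>A. inner a u \<noteq> 0 \<longrightarrow> 4 * gf u * norm a \<le> \<bar>inner a u\<bar>)"
  proof -
    have "\<forall>u. \<exists>g>0. g \<le> 1/4 \<and> (\<forall>a\<in>A. inner a u \<noteq> 0 \<longrightarrow> 4 * g * norm a \<le> \<bar>inner a u\<bar>)"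
      using exists_g[OF finA] by blast
    then obtain gf where "\<forall>u. 0 < gf u \<and> gf u \<le> 1/4 \<and> (\<forall>a\<in>A. inner a u \<noteq> 0 \<longrightarrow> 4 * gf u * norm a \<le> \<bar>inner a u\<bar>)"
      by (rule choice[THEN exE]) blast
    thus ?thesis using that by blast
  qed
  have reg: "region F lam M B1 u (gf u) (Kf u) (phi (G u) lam)" if u: "u \<in> Sph" for u
  proof
    show "\<forall>S\<in>F. cset S \<noteq> {}" "0 \<le> lam" "lam < 2" "\<forall>S\<in>F. \<exists>c\<in>cset S. norm c \<le> M"
      "\<forall>S\<in>F. \<forall>(a, b)\<in>S. a \<noteq> 0 \<longrightarrow> \<bar>b\<bar> \<le> B1 * norm a" "0 \<le> M" "0 \<le> B1"
      using neF lam0 lam2 cM B1 M0 B10 by auto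
    show "norm u = 1" using u unfolding Sph_def by auto
    show "0 < gf u" "gf u \<le> 1/4" using gf by auto
    show "\<forall>S\<in>F. (\<exists>(a, b)\<in>S. 4 * gf u * norm a \<le> inner a u \<and> a \<noteq> 0) \<or> (\<forall>(a, b)\<in>S. inner a u \<le> 0)"
    proof
      fix S assume S: "S \<in> F"
      show "(\<exists>(a, b)\<in>S. 4 * gf u * norm a \<le> inner a u \<and> a \<noteq> 0) \<or> (\<forall>(a, b)\<in>S. inner a u \<le> 0)"
      proof (cases "\<forall>(a, b)\<in>S. inner a u \<le> 0")
        case False
        then obtain a b where ab: "(a,b) \<in> S" "inner a u > 0" by auto
        have "a \<in> A" unfolding A_def using S ab by (metis UnionI fst_conv image_eqI)
        moreover have "\<forall>a\<in>A. inner a u \<noteq> 0 \<longrightarrow> 4 * gf u * norm a \<le> \<bar>inner a u\<bar>" using gf by blast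
        ultimately have "4 * gf u * norm a \<le> \<bar>inner a u\<bar>" using ab by auto
        hence "4 * gf u * norm a \<le> inner a u" using ab by simp
        moreover have "a \<noteq> 0" using ab by auto
        ultimately show ?thesis using ab by auto
      qed simp
    qed
    show "\<forall>S\<in>F. \<forall>(a, b)\<in>S. inner a u < 0 \<longrightarrow> 4 * gf u * norm a \<le> - inner a u"
    proof (intro ballI, clarify)
      fix S a b assume S: "S \<in> F" and ab: "(a,b) \<in> S" and neg: "inner a u < 0"
      have "a \<in> A" unfolding A_def using S ab by (metis UnionI fst_conv image_eqI)
      moreover have "\<forall>a\<in>A. inner a u \<noteq> 0 \<longrightarrow> 4 * gf u * norm a \<le> \<bar>inner a u\<bar>" using gf by blast
      ultimately have "4 * gf u * norm a \<le> \<bar>inner a u\<bar>" using neg by auto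
      thus "4 * gf u * norm a \<le> - inner a u" using neg by simp
    qed
    have K: "\<forall>y z. reach (G u) lam y z \<longrightarrow> norm z \<le> norm y + Kf u" using Kf u by auto
    show "\<And>y. norm y \<le> phi (G u) lam y" by (rule phi_ge[OF K])
    show "\<And>y. phi (G u) lam y \<le> norm y + Kf u" by (rule phi_le[OF K])
    show "\<And>y y'. phi (G u) lam y \<le> phi (G u) lam y' + norm (y - y')"
      by (rule phi_lip[OF G_ne _ K]) (use lam2 in simp)
    show "\<And>S \<mu> y. S \<in> F \<Longrightarrow> (\<forall>(a,b)\<in>S. inner a u \<le> 0) \<Longrightarrow> 0 \<le> \<mu> \<Longrightarrow> \<mu> \<le> lam
                 \<Longrightarrow> phi (G u) lam (rp {(a,b)\<in>S. inner a u = 0} \<mu> y) \<le> phi (G u) lam y"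
    proof -
      fix S \<mu> y assume S: "S \<in> F" "\<forall>(a,b)\<in>S. inner a u \<le> 0" and mu: "0 \<le> \<mu>" "\<mu> \<le> lam"
      have "{(a,b)\<in>S. inner a u = 0} \<in> G u" unfolding G_def using S by auto
      hence "reach (G u) lam y (rp {(a,b)\<in>S. inner a u = 0} \<mu> y)" using mu by (intro reach_one)
      thus "phi (G u) lam (rp {(a,b)\<in>S. inner a u = 0} \<mu> y) \<le> phi (G u) lam y" by (rule phi_mono[OF K])
    qed
  qed
  define kp where "kp u = (2 - lam) * gf u / 8" for u
  define dd where "dd u = (2 - lam) * gf u / 8 / 8" for u
  define aq where "aq u = ((2 - lam) * gf u / 8) * ((2 - lam) * gf u / 8 / 8)" for u
  define Ph where "Ph u = phi (G u) lam" for u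
  have cst: "0 < kp u" "kp u \<le> 1/16" "aq u \<le> 1/1000" "0 < aq u" "0 < dd u" "dd u \<le> 1" if "u \<in> Sph" for u
  proof -
    note C = region.glob_consts[OF reg[OF that]]
    show "0 < kp u" "kp u \<le> 1/16" "aq u \<le> 1/1000" "0 < aq u" using C unfolding kp_def aq_def by auto
    have "dd u = kp u / 8" unfolding dd_def kp_def by simp
    moreover have "0 < kp u" "kp u \<le> 1/16" using C unfolding kp_def by auto
    ultimately show "0 < dd u" "dd u \<le> 1" by auto
  qed
  have Kf0: "0 \<le> Kf u" if "u \<in> Sph" for u using Kf that reach.refl by fastforce
  have "\<forall>u\<in>Sph. \<exists>T>0. \<forall>z S \<mu>. Ug u (dd u) z \<longrightarrow> T \<le> inner z u \<longrightarrow> S \<in> F \<longrightarrow> 0 \<le> \<mu> \<longrightarrow> \<mu> \<le> lam \<longrightarrow>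
     (Ug u (dd u) (rp S \<mu> z) \<and> Wg u (kp u) (Ph u) (rp S \<mu> z) \<le> Wg u (kp u) (Ph u) z) \<or>
     (\<not> Ug u (dd u) (rp S \<mu> z) \<and> norm (rp S \<mu> z) \<le> (1 - aq u / 4) * Wg u (kp u) (Ph u) z)"
    using region.glob[OF reg] unfolding kp_def dd_def aq_def Ph_def by blast
  then obtain Tf where Tf: "\<forall>u\<in>Sph. Tf u > 0 \<and> (\<forall>z S \<mu>. Ug u (dd u) z \<longrightarrow> Tf u \<le> inner z u \<longrightarrow> S \<in> F \<longrightarrow> 0 \<le> \<mu> \<longrightarrow> \<mu> \<le> lam \<longrightarrow>
     (Ug u (dd u) (rp S \<mu> z) \<and> Wg u (kp u) (Ph u) (rp S \<mu> z) \<le> Wg u (kp u) (Ph u) z) \<or>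
     (\<not> Ug u (dd u) (rp S \<mu> z) \<and> norm (rp S \<mu> z) \<le> (1 - aq u / 4) * Wg u (kp u) (Ph u) z))"
    by (rule bchoice[THEN exE]) blast
  have gU: "0 \<le> inner z u \<and> norm z \<le> 2 * inner z u \<and> inner z u \<le> Wg u (kp u) (Ph u) z"
    if "u \<in> Sph" "Ug u (dd u) z" for u z
    using region.glob_U[OF reg[OF that(1)]] that(2) unfolding kp_def dd_def Ph_def by blast
  have gC: "Ug u (dd u) z \<and> Wg u (kp u) (Ph u) z \<le> (1 + aq u / 8) * norm z + kp u * Kf u"
    if "u \<in> Sph" "norm (z - inner z u *\<^sub>R u) \<le> (dd u / 8) * inner z u" "0 \<le> inner z u" for u z
    using region.glob_core[OF reg[OF that(1)]] that(2,3) unfolding kp_def dd_def aq_def Ph_def by blast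
  have "Sph \<subseteq> (\<Union>u\<in>Sph. ball u (dd u / 32))" using cst by force
  then obtain D where D: "D \<subseteq> Sph" "finite D" "Sph \<subseteq> (\<Union>u\<in>D. ball u (dd u / 32))"
    using compactE_image[OF cSph, of Sph "\<lambda>u. ball u (dd u / 32)"] by blast
  define Kst where "Kst = (\<Sum>u\<in>D. kp u * Kf u)"
  have kpK0: "0 \<le> kp u * Kf u" if "u \<in> D" for u
  proof -
    have "u \<in> Sph" using that D by auto
    thus ?thesis using cst(1)[of u] Kf0[of u] by simp
  qed
  have Kst0: "0 \<le> Kst" unfolding Kst_def using kpK0 by (intro sum_nonneg) auto
  have KstD: "kp u * Kf u \<le> Kst" if "u \<in> D" for u
    unfolding Kst_def using D(2) that kpK0 by (intro member_le_sum) auto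
  define rho where "rho = 1 + (\<Sum>u\<in>D. 2 * Tf u + 32 * Kst / aq u)"
  have termnn: "0 \<le> 2 * Tf u + 32 * Kst / aq u" if "u \<in> D" for u
  proof -
    have uS: "u \<in> Sph" using that D by auto
    hence "0 < Tf u" "0 < aq u" using Tf cst(4) by auto
    thus ?thesis using Kst0 by simp
  qed
  have rho1: "1 \<le> rho" unfolding rho_def using termnn by (simp add: sum_nonneg)
  have rhoD: "2 * Tf u + 32 * Kst / aq u \<le> rho" if "u \<in> D" for u
  proof -
    have "2 * Tf u + 32 * Kst / aq u \<le> (\<Sum>u\<in>D. 2 * Tf u + 32 * Kst / aq u)"
      using D that termnn by (intro member_le_sum) auto
    thus ?thesis unfolding rho_def by simp
  qed
  have Aspan: "\<forall>S\<in>F. \<forall>(a,b)\<in>S. a \<in> span E"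
  proof (intro ballI, clarify)
    fix S a b assume "S \<in> F" "(a,b) \<in> S"
    hence "a \<in> A" unfolding A_def by (metis UnionI fst_conv image_eqI)
    thus "a \<in> span E" using E(3) span_superset[of A] by auto
  qed
  have core: "\<exists>u\<in>D. Ug u (dd u) z \<and> Wg u (kp u) (Ph u) z / (1 + aq u / 8) \<le> norm z + Kst"
    if z: "z \<in> span E" "rho \<le> norm z" for z
  proof -
    have z0: "z \<noteq> 0" using z rho1 by auto
    define v where "v = z /\<^sub>R norm z"
    have "v \<in> Sph" unfolding v_def Sph_def using z z0 by (auto intro: span_scale)
    then obtain u where u: "u \<in> D" "v \<in> ball u (dd u / 32)" using D by auto
    have uS: "u \<in> Sph" using u D by auto
    have nu: "norm u = 1" using uS unfolding Sph_def by auto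
    have "norm (z /\<^sub>R norm z - u) < dd u / 32" using u(2) unfolding v_def by (simp add: dist_norm norm_minus_commute)
    from core_cover[OF nu z0 cst(5)[OF uS] cst(6)[OF uS] this]
    have cc: "norm (z - inner z u *\<^sub>R u) \<le> (dd u / 8) * inner z u" "0 \<le> inner z u" .
    from gC[OF uS cc] have g: "Ug u (dd u) z" "Wg u (kp u) (Ph u) z \<le> (1 + aq u / 8) * norm z + kp u * Kf u" by auto
    have ap: "0 < 1 + aq u / 8" using cst(4)[OF uS] by simp
    have "Wg u (kp u) (Ph u) z / (1 + aq u / 8) \<le> ((1 + aq u / 8) * norm z + kp u * Kf u) / (1 + aq u / 8)"
      using g(2) ap by (intro divide_right_mono) auto
    also have "\<dots> = norm z + kp u * Kf u / (1 + aq u / 8)" using ap by (simp add: field_simps)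
    also have "\<dots> \<le> norm z + kp u * Kf u"
    proof -
      have "0 \<le> kp u * Kf u" using cst(1)[OF uS] Kf0[OF uS] by simp
      moreover have "1 \<le> 1 + aq u / 8" using cst(4)[OF uS] by simp
      ultimately have "kp u * Kf u * 1 \<le> kp u * Kf u * (1 + aq u / 8)" by (intro mult_left_mono)
      hence "kp u * Kf u / (1 + aq u / 8) \<le> kp u * Kf u" using ap by (simp add: pos_divide_le_eq)
      thus ?thesis by simp
    qed
    also have "\<dots> \<le> norm z + Kst" using KstD[OF u(1)] by simp
    finally show ?thesis using g(1) u(1) by blast
  qed
  define rho2 where "rho2 = rho + 2 * (rho + M)"
  define B0 where "B0 = rho2 + Kst"
  define Good where "Good z \<longleftrightarrow> norm z \<le> rho \<or> (\<exists>u\<in>D. Ug u (dd u) z \<and> Wg u (kp u) (Ph u) z / (1 + aq u / 8) \<le> B0)" for z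
  have step: "Good (rp S \<mu> z)" if z: "z \<in> span E" "Good z" and S: "S \<in> F" and mu: "0 \<le> \<mu>" "\<mu> \<le> lam" for z S \<mu>
  proof -
    define z' where "z' = rp S \<mu> z"
    have z'E: "z' \<in> span E" unfolding z'_def by (rule rp_span[OF E(1,2) bspec[OF Aspan S] bspec[OF neF S] z(1)])
    show ?thesis
    proof (cases "norm z' \<le> rho")
      case True thus ?thesis unfolding Good_def z'_def by simp
    next
      case False
      then obtain u' where u': "u' \<in> D" "Ug u' (dd u') z'" "Wg u' (kp u') (Ph u') z' / (1 + aq u' / 8) \<le> norm z' + Kst"
        using core[OF z'E] False by (meson not_le less_imp_le)
      have viaB: "Good z'" if "norm z' + Kst \<le> B0"
      proof -
        have "Wg u' (kp u') (Ph u') z' / (1 + aq u' / 8) \<le> B0" using u'(3) that by linarith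
        thus ?thesis using u'(1,2) unfolding Good_def by blast
      qed
      from z(2) show ?thesis unfolding z'_def[symmetric]
      proof (unfold Good_def, elim disjE bexE conjE)
        assume zr: "norm z \<le> rho"
        have neS: "cset S \<noteq> {}" using neF S by auto
        note cc = cset_closed cset_convex neS
        obtain c where c: "c \<in> cset S" "norm c \<le> M" using cM S by auto
        have "norm (z' - z) = \<mu> * norm (proj (cset S) z - z)" unfolding z'_def rp_diff_g
          using mu by simp
        also have "\<dots> \<le> 2 * norm (proj (cset S) z - z)" using mu lam2 by (intro mult_right_mono) auto
        also have "norm (proj (cset S) z - z) \<le> norm (z - c)"
          using proj_min[OF cc c(1), of z] by (simp add: dist_norm norm_minus_commute)
        also have "norm (z - c) \<le> rho + M" using zr c(2) norm_triangle_ineq4[of z c] by linarith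
        finally have "norm (z' - z) \<le> 2 * (rho + M)" by simp
        hence "norm z' \<le> rho2" unfolding rho2_def using zr norm_triangle_sub[of z' z] by linarith
        thus "norm z' \<le> rho \<or> (\<exists>u\<in>D. Ug u (dd u) z' \<and> Wg u (kp u) (Ph u) z' / (1 + aq u / 8) \<le> B0)"
          using viaB unfolding Good_def B0_def by linarith
      next
        fix u assume uD: "u \<in> D" and Uz: "Ug u (dd u) z" and Wz: "Wg u (kp u) (Ph u) z / (1 + aq u / 8) \<le> B0"
        have uS: "u \<in> Sph" using uD D by auto
        show "norm z' \<le> rho \<or> (\<exists>u\<in>D. Ug u (dd u) z' \<and> Wg u (kp u) (Ph u) z' / (1 + aq u / 8) \<le> B0)"
        proof (cases "norm z \<le> rho")
          case True
          have neS: "cset S \<noteq> {}" using neF S by auto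
          note cc = cset_closed cset_convex neS
          obtain c where c: "c \<in> cset S" "norm c \<le> M" using cM S by auto
          have "norm (z' - z) = \<mu> * norm (proj (cset S) z - z)" unfolding z'_def rp_diff_g
            using mu by simp
          also have "\<dots> \<le> 2 * norm (proj (cset S) z - z)" using mu lam2 by (intro mult_right_mono) auto
          also have "norm (proj (cset S) z - z) \<le> norm (z - c)"
            using proj_min[OF cc c(1), of z] by (simp add: dist_norm norm_minus_commute)
          also have "norm (z - c) \<le> rho + M" using True c(2) norm_triangle_ineq4[of z c] by linarith
          finally have "norm (z' - z) \<le> 2 * (rho + M)" by simp
          hence "norm z' \<le> rho2" unfolding rho2_def using True norm_triangle_sub[of z' z] by linarith
          thus ?thesis using viaB unfolding Good_def B0_def by linarith
        next
          case False
          note zbig = False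
          have gu: "0 \<le> inner z u" "norm z \<le> 2 * inner z u" "inner z u \<le> Wg u (kp u) (Ph u) z" using gU[OF uS Uz] by auto
          have rD: "2 * Tf u + 32 * Kst / aq u \<le> rho" by (rule rhoD[OF uD])
          have Tz: "Tf u \<le> inner z u"
          proof -
            have "0 \<le> 32 * Kst / aq u" using Kst0 cst(4)[OF uS] by simp
            thus ?thesis using rD gu False by linarith
          qed
          from Tf uS have "\<forall>z S \<mu>. Ug u (dd u) z \<longrightarrow> Tf u \<le> inner z u \<longrightarrow> S \<in> F \<longrightarrow> 0 \<le> \<mu> \<longrightarrow> \<mu> \<le> lam \<longrightarrow>
             (Ug u (dd u) (rp S \<mu> z) \<and> Wg u (kp u) (Ph u) (rp S \<mu> z) \<le> Wg u (kp u) (Ph u) z) \<or>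
             (\<not> Ug u (dd u) (rp S \<mu> z) \<and> norm (rp S \<mu> z) \<le> (1 - aq u / 4) * Wg u (kp u) (Ph u) z)" by blast
          hence cases: "(Ug u (dd u) z' \<and> Wg u (kp u) (Ph u) z' \<le> Wg u (kp u) (Ph u) z) \<or>
             (\<not> Ug u (dd u) z' \<and> norm z' \<le> (1 - aq u / 4) * Wg u (kp u) (Ph u) z)"
            using Uz Tz S mu unfolding z'_def by blast
          have ap: "0 < 1 + aq u / 8" using cst(4)[OF uS] by simp
          show ?thesis
          proof (cases "Ug u (dd u) z' \<and> Wg u (kp u) (Ph u) z' \<le> Wg u (kp u) (Ph u) z")
            case True
            hence "Wg u (kp u) (Ph u) z' / (1 + aq u / 8) \<le> Wg u (kp u) (Ph u) z / (1 + aq u / 8)"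
              using ap by (intro divide_right_mono) auto
            hence "Wg u (kp u) (Ph u) z' / (1 + aq u / 8) \<le> B0" using Wz by linarith
            thus ?thesis using True uD unfolding z'_def by blast
          next
            case False
            hence nz': "norm z' \<le> (1 - aq u / 4) * Wg u (kp u) (Ph u) z" using cases by blast
            define Wv where "Wv = Wg u (kp u) (Ph u) z"
            define a where "a = aq u"
            have a: "0 < a" "a \<le> 1/1000" using cst(3,4)[OF uS] unfolding a_def by auto
            have W0: "0 \<le> Wv" using gu unfolding Wv_def by linarith
            have WK: "Kst \<le> Wv * (a / 9)"
            proof -
              have "0 < Tf u" using Tf uS by blast
              hence "32 * Kst / a \<le> rho" using rD unfolding a_def by linarith
              also have "rho \<le> 2 * Wv" using zbig gu unfolding Wv_def by linarith
              finally have "32 * Kst / a \<le> 2 * Wv" .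
              hence "32 * Kst \<le> 2 * Wv * a" using a by (simp add: pos_divide_le_eq)
              thus ?thesis using Kst0 by simp
            qed
            have "Wv * (1 - a / 8) \<le> Wv / (1 + a / 8)"
            proof -
              have "(1 - a/8) * (1 + a/8) \<le> 1" by (simp add: algebra_simps)
              hence "1 - a/8 \<le> 1 / (1 + a/8)" using a by (simp add: pos_le_divide_eq)
              hence "Wv * (1 - a/8) \<le> Wv * (1 / (1 + a/8))" using W0 by (intro mult_left_mono)
              thus ?thesis by simp
            qed
            moreover have "(1 - a / 4) * Wv + Wv * (a / 9) \<le> Wv * (1 - a / 8)"
            proof -
              have "Wv * (a / 9 - a / 8) \<le> Wv * (a / 4 - a/4)" using W0 a by (intro mult_left_mono) auto
              thus ?thesis by (simp add: algebra_simps)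
            qed
            ultimately have "norm z' + Kst \<le> Wv / (1 + a / 8)" using nz' WK unfolding Wv_def a_def by linarith
            hence "norm z' + Kst \<le> B0" using Wz unfolding Wv_def a_def by linarith
            thus ?thesis using viaB unfolding Good_def by blast
          qed
        qed
      qed
    qed
  qed
  have inv: "x = 0 \<Longrightarrow> z \<in> span E \<and> Good z" if "reach F lam x z" for x z
    using that
  proof (induction rule: reach.induct)
    case (refl x)
    thus ?case using rho1 unfolding Good_def by (simp add: span_zero)
  next
    case (step x z S \<mu>)
    hence z: "z \<in> span E" "Good z" by auto
    have "rp S \<mu> z \<in> span E" by (rule rp_span[OF E(1,2) bspec[OF Aspan step(2)] bspec[OF neF step(2)] z(1)])
    thus ?case using step.hyps z by (blast intro: \<open>\<And>z S \<mu>. z \<in> span E \<Longrightarrow> Good z \<Longrightarrow> S \<in> F \<Longrightarrow> 0 \<le> \<mu> \<Longrightarrow> \<mu> \<le> lam \<Longrightarrow> Good (rp S \<mu> z)\<close>)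
  qed
  have B00: "0 \<le> B0" unfolding B0_def rho2_def using rho1 M0 Kst0 by simp
  have bnd: "norm z \<le> rho + 4 * B0" if "Good z" for z
    using that unfolding Good_def
  proof (elim disjE bexE conjE)
    assume "norm z \<le> rho"
    moreover have "0 \<le> B0" unfolding B0_def rho2_def using rho1 M0 Kst0 by simp
    ultimately show ?thesis by simp
  next
    fix u assume uD: "u \<in> D" and Uz: "Ug u (dd u) z" and Wz: "Wg u (kp u) (Ph u) z / (1 + aq u / 8) \<le> B0"
    have uS: "u \<in> Sph" using uD D by auto
    have gu: "norm z \<le> 2 * inner z u" "inner z u \<le> Wg u (kp u) (Ph u) z" using gU[OF uS Uz] by auto
    have ap: "0 < 1 + aq u / 8" "1 + aq u / 8 \<le> 2" using cst(3,4)[OF uS] by auto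
    have "Wg u (kp u) (Ph u) z \<le> B0 * (1 + aq u / 8)" using Wz ap by (simp add: pos_divide_le_eq)
    also have "\<dots> \<le> B0 * 2" using ap B00 by (intro mult_left_mono) auto
    finally have "Wg u (kp u) (Ph u) z \<le> 2 * B0" by simp
    moreover have "0 \<le> rho" using rho1 by simp
    ultimately show ?thesis using gu by linarith
  qed
  have "\<forall>z. reach F lam 0 z \<longrightarrow> norm z \<le> rho + 4 * B0" using inv bnd by blast
  from bound_from_zero[OF neF _ this] lam2 show ?case by auto
qed


theorem theorem3p2:
  fixes Cs :: "'a::{real_inner,complete_space} set set"
    and lam :: real
    and x :: "nat \<Rightarrow> 'a"
  assumes "finite Cs" and "Cs \<noteq> {}"
    and "\<forall>C\<in>Cs. C \<noteq> {} \<and> polyhedral C"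
    and "0 \<le> lam" and "lam < 2"
    and "\<forall>n. \<exists>R\<in>relaxed_projectors Cs {0..lam}. x (Suc n) = R (x n)"
  shows "bounded (range x)"
proof -
  have "\<forall>C\<in>Cs. \<exists>S. finite S \<and> cset S = C"
  proof
    fix C assume C: "C \<in> Cs"
    have pC: "polyhedral C" using assms(3) C by blast
    obtain I :: "nat set" and a :: "nat \<Rightarrow> 'a" and \<beta> where
      PP: "finite I \<and> (\<forall>i\<in>I. a i \<noteq> 0) \<and> C = {x. \<forall>i\<in>I. inner (a i) x \<le> \<beta> i}"
      using pC unfolding polyhedral_def by (elim exE) (rule that, assumption)
    hence P: "finite I" "C = {x. \<forall>i\<in>I. inner (a i) x \<le> \<beta> i}" by auto
    have "cset ((\<lambda>i. (a i, \<beta> i)) ` I) = C" unfolding P(2) cset_def by auto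
    thus "\<exists>S. finite S \<and> cset S = C" using P(1) by blast
  qed
  then obtain Sf where Sf: "\<forall>C\<in>Cs. finite (Sf C) \<and> cset (Sf C) = C"
    by (rule bchoice[THEN exE]) blast
  define F where "F = Sf ` Cs"
  have finF: "finite F" unfolding F_def using assms(1) by simp
  have FS: "\<forall>S\<in>F. finite S \<and> cset S \<noteq> {}"
  proof
    fix S assume "S \<in> F"
    then obtain C where C: "C \<in> Cs" "S = Sf C" unfolding F_def by blast
    thus "finite S \<and> cset S \<noteq> {}" using Sf assms(3) by simp
  qed
  obtain K where K: "\<forall>x z. reach F lam x z \<longrightarrow> norm z \<le> norm x + K"
    using main_bound[OF finF FS assms(4,5)] by blast
  have r: "reach F lam (x 0) (x n)" for n
  proof (induction n)
    case 0 show ?case by (rule reach.refl)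
  next
    case (Suc n)
    obtain R where R: "R \<in> relaxed_projectors Cs {0..lam}" "x (Suc n) = R (x n)" using assms(6) by blast
    then obtain C \<mu> where C: "C \<in> Cs" "\<mu> \<in> {0..lam}" "R = (\<lambda>x. (1 - \<mu>) *\<^sub>R x + \<mu> *\<^sub>R proj C x)"
      unfolding relaxed_projectors_def by blast
    have "R (x n) = rp (Sf C) \<mu> (x n)" unfolding C(3) rp_def using Sf C(1) by simp
    moreover have "Sf C \<in> F" unfolding F_def using C(1) by simp
    ultimately have "reach F lam (x 0) (rp (Sf C) \<mu> (x n))"
      using C(2) by (intro reach.step[OF Suc.IH]) auto
    thus ?case using R(2) \<open>R (x n) = rp (Sf C) \<mu> (x n)\<close> by simp
  qed
  have "\<forall>y\<in>range x. norm y \<le> norm (x 0) + K" using r K by auto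
  thus ?thesis unfolding bounded_iff by blast
qed


end
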